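(* For any $\alpha\in(0,1)$ and any $p,q>0$ there exist positive definite $2\times2$ matrices $A,B$ such that $SG_{\alpha,p}(A,B)\not\le_{\mathrm{chao}}\mathcal{A}_{\alpha,q}(A,B)$ (hence $SG_{\alpha,p}(A,B)\not\le\mathcal{A}_{\alpha,q}(A,B)$).
   Context: For positive definite $A,B$: $A\#B:=A^{1/2}(A^{-1/2}BA^{-1/2})^{1/2}A^{1/2}$; $F_\alpha(A,B):=(A^{-1}\#B)^\alpha A(A^{-1}\#B)^\alpha$ (weighted spectral geometric mean); $SG_{\alpha,p}(A,B):=F_\alpha(A^p,B^p)^{1/p}$; $\mathcal{A}_{\alpha,q}(A,B):=((1-\alpha)A^q+\alpha B^q)^{1/q}$. For positive definite $X,Y$, $X\le Y$ is the Loewner order and $X\le_{\mathrm{chao}}Y$ (chaotic order) means $\log X\le\log Y$. *)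

theory Defs
  imports "HOL-Analysis.Analysis"
begin

definition pos_def :: "real^'n^'n \<Rightarrow> bool" where
  "pos_def A \<longleftrightarrow> transpose A = A \<and> (\<forall>v. v \<noteq> 0 \<longrightarrow> v \<bullet> (A *v v) > 0)"

definition loewner_le :: "real^'n^'n \<Rightarrow> real^'n^'n \<Rightarrow> bool" where
  "loewner_le X Y \<longleftrightarrow> (\<forall>v. v \<bullet> ((Y - X) *v v) \<ge> 0)"

definition mdiag :: "real^'n \<Rightarrow> real^'n^'n" where
  "mdiag d = (\<chi> i j. if i = j then d $ i else 0)"

definition mfun :: "(real \<Rightarrow> real) \<Rightarrow> real^'n^'n \<Rightarrow> real^'n^'n" where
  "mfun f A = (THE X. \<exists>U d. orthogonal_matrix U \<and> A = U ** mdiag d ** transpose U \<and>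
                         X = U ** mdiag (\<chi> i. f (d $ i)) ** transpose U)"

definition mpow :: "real^'n^'n \<Rightarrow> real \<Rightarrow> real^'n^'n" where
  "mpow A t = mfun (\<lambda>x. x powr t) A"

definition mlog :: "real^'n^'n \<Rightarrow> real^'n^'n" where
  "mlog A = mfun ln A"

definition gmean :: "real^'n^'n \<Rightarrow> real^'n^'n \<Rightarrow> real^'n^'n" where
  "gmean A B = mpow A (1/2) **
     mpow (mpow A (-1/2) ** B ** mpow A (-1/2)) (1/2) ** mpow A (1/2)"

definition Fsg :: "real \<Rightarrow> real^'n^'n \<Rightarrow> real^'n^'n \<Rightarrow> real^'n^'n" where
  "Fsg \<alpha> A B = mpow (gmean (matrix_inv A) B) \<alpha> ** A ** mpow (gmean (matrix_inv A) B) \<alpha>"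

definition SG :: "real \<Rightarrow> real \<Rightarrow> real^'n^'n \<Rightarrow> real^'n^'n \<Rightarrow> real^'n^'n" where
  "SG \<alpha> p A B = mpow (Fsg \<alpha> (mpow A p) (mpow B p)) (1/p)"

definition Amean :: "real \<Rightarrow> real \<Rightarrow> real^'n^'n \<Rightarrow> real^'n^'n \<Rightarrow> real^'n^'n" where
  "Amean \<alpha> q A B = mpow ((1 - \<alpha>) *\<^sub>R mpow A q + \<alpha> *\<^sub>R mpow B q) (1/q)"

definition chao_le :: "real^'n^'n \<Rightarrow> real^'n^'n \<Rightarrow> bool" where
  "chao_le X Y \<longleftrightarrow> loewner_le (mlog X) (mlog Y)"

end

theory Submission
  imports Defs "HOL-Real_Asymp.Real_Asymp"
begin

definition kA11 :: "real \<Rightarrow> real \<Rightarrow> real \<Rightarrow> real" where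
  "kA11 a r k = a * k^2 * (1 + k^2) powr (r - 1)"
definition kA12 :: "real \<Rightarrow> real \<Rightarrow> real \<Rightarrow> real" where
  "kA12 a r k = a * k * (1 + k^2) powr (r - 1)"
definition kA22 :: "real \<Rightarrow> real \<Rightarrow> real \<Rightarrow> real" where
  "kA22 a r k = 1 - a + a * (1 + k^2) powr (r - 1)"
definition km1 :: "real \<Rightarrow> real \<Rightarrow> real \<Rightarrow> real" where
  "km1 a r k = (kA11 a r k + kA22 a r k + sqrt ((kA11 a r k - kA22 a r k)^2 + 4 * (kA12 a r k)^2)) / 2"
definition km2 :: "real \<Rightarrow> real \<Rightarrow> real \<Rightarrow> real" where
  "km2 a r k = (kA11 a r k + kA22 a r k - sqrt ((kA11 a r k - kA22 a r k)^2 + 4 * (kA12 a r k)^2)) / 2"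



lemma k_gt_w2:
  assumes "1 < r" "0 < a" "a < 1"
  shows "((\<lambda>k. (kA22 a r k - km2 a r k) / (km1 a r k - km2 a r k)) \<longlongrightarrow> 0) at_top"
  using assms unfolding km1_def km2_def kA11_def kA12_def kA22_def
  by real_asymp

lemma k_gt_w2l:
  assumes "1 < r" "0 < a" "a < 1"
  shows "((\<lambda>k. (kA22 a r k - km2 a r k) / (km1 a r k - km2 a r k) * ln (km1 a r k)) \<longlongrightarrow> 0) at_top"
  using assms unfolding km1_def km2_def kA11_def kA12_def kA22_def
  by real_asymp

lemma k_gt_w1:
  assumes "1 < r" "0 < a" "a < 1"
  shows "((\<lambda>k. (kA11 a r k - km2 a r k) / (km1 a r k - km2 a r k)) \<longlongrightarrow> 1) at_top"
  using assms unfolding km1_def km2_def kA11_def kA12_def kA22_def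
  by real_asymp

lemma k_lt_m2:
  assumes "r < 1" "0 < r" "0 < a" "a < 1"
  shows "((\<lambda>k. km2 a r k) \<longlongrightarrow> 1 - a) at_top"
  using assms unfolding km1_def km2_def kA11_def kA12_def kA22_def
  by (real_asymp simp: field_simps)

lemma k_lt_w2:
  assumes "r < 1" "0 < r" "0 < a" "a < 1"
  shows "((\<lambda>k. (kA22 a r k - km2 a r k) / (km1 a r k - km2 a r k)) \<longlongrightarrow> 0) at_top"
  using assms unfolding km1_def km2_def kA11_def kA12_def kA22_def
  by real_asymp

lemma k_lt_w2l:
  assumes "r < 1" "0 < r" "0 < a" "a < 1"
  shows "((\<lambda>k. (kA22 a r k - km2 a r k) / (km1 a r k - km2 a r k) * ln (km1 a r k)) \<longlongrightarrow> 0) at_top"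
  using assms unfolding km1_def km2_def kA11_def kA12_def kA22_def
  by real_asymp

lemma k_lt_w1:
  assumes "r < 1" "0 < r" "0 < a" "a < 1"
  shows "((\<lambda>k. (kA11 a r k - km2 a r k) / (km1 a r k - km2 a r k)) \<longlongrightarrow> 1) at_top"
  using assms unfolding km1_def km2_def kA11_def kA12_def kA22_def
  by real_asymp

lemma k_eq_m2:
  assumes "r = 1" "0 < a" "a < 1"
  shows "((\<lambda>k. km2 a r k) \<longlongrightarrow> 1 - a) at_top"
  using assms unfolding km1_def km2_def kA11_def kA12_def kA22_def
  by (real_asymp simp: field_simps)

lemma k_eq_w2:
  assumes "r = 1" "0 < a" "a < 1"
  shows "((\<lambda>k. (kA22 a r k - km2 a r k) / (km1 a r k - km2 a r k)) \<longlongrightarrow> 0) at_top"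
  using assms unfolding km1_def km2_def kA11_def kA12_def kA22_def
  by real_asymp

lemma k_eq_w2l:
  assumes "r = 1" "0 < a" "a < 1"
  shows "((\<lambda>k. (kA22 a r k - km2 a r k) / (km1 a r k - km2 a r k) * ln (km1 a r k)) \<longlongrightarrow> 0) at_top"
  using assms unfolding km1_def km2_def kA11_def kA12_def kA22_def
  by real_asymp

lemma k_eq_w1:
  assumes "r = 1" "0 < a" "a < 1"
  shows "((\<lambda>k. (kA11 a r k - km2 a r k) / (km1 a r k - km2 a r k)) \<longlongrightarrow> 1) at_top"
  using assms unfolding km1_def km2_def kA11_def kA12_def kA22_def
  by real_asymp

lemma k_gt_m2':
  assumes "0 < s" "0 < a" "a < 1"
  shows "((\<lambda>k::real. 2 * (a * (1 - a) * k^2 * (1 + k^2) powr s) / (a * k^2 * (1 + k^2) powr s +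
            (1 - a + a * (1 + k^2) powr s) +
            sqrt ((a * k^2 * (1 + k^2) powr s -
               (1 - a + a * (1 + k^2) powr s))^2 +
              4 * (a * k * (1 + k^2) powr s)^2))) \<longlongrightarrow> 1 - a) at_top"
  using assms by real_asymp

lemma km2_conj:
  assumes "0 < a" "a < 1" "0 < k"
  shows "km2 a r k = 2 * (a * (1 - a) * k^2 * (1 + k^2) powr (r - 1)) /
     (kA11 a r k + kA22 a r k + sqrt ((kA11 a r k - kA22 a r k)^2 + 4 * (kA12 a r k)^2))"
proof -
  define A where "A = kA11 a r k" define B where "B = kA12 a r k" define C where "C = kA22 a r k"
  define b where "b = (1 + k^2) powr (r - 1)"
  have "1 + k^2 > 0" by (simp add: add_pos_nonneg)
  hence b: "b > 0" unfolding b_def by simp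
  have A: "A > 0" unfolding A_def kA11_def using assms b b_def by simp
  have C: "C > 0" unfolding C_def kA22_def using assms b b_def by (simp add: add_pos_nonneg)
  have det: "A * C - B^2 = a * (1 - a) * k^2 * b"
    unfolding A_def B_def C_def kA11_def kA12_def kA22_def b_def by (simp add: algebra_simps power2_eq_square)
  define R where "R = sqrt ((A - C)^2 + 4 * B^2)"
  have R2: "R^2 = (A - C)^2 + 4 * B^2" unfolding R_def by simp
  have R0: "R \<ge> 0" unfolding R_def by simp
  have pos: "A + C + R > 0" using A C R0 by simp
  have "(A + C - R) / 2 = 2 * (A * C - B^2) / (A + C + R)"
    using pos R2 by (simp add: field_simps power2_eq_square)
  note eq2 = this[unfolded det]
  show ?thesis using eq2 unfolding km2_def A_def B_def C_def R_def b_def .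
qed

lemma k_gt_m2:
  assumes "1 < r" "0 < a" "a < 1"
  shows "((\<lambda>k. km2 a r k) \<longlongrightarrow> 1 - a) at_top"
proof -
  have ev: "\<forall>\<^sub>F k in at_top. 2 * (a * (1 - a) * k^2 * (1 + k^2) powr (r - 1)) /
     (kA11 a r k + kA22 a r k + sqrt ((kA11 a r k - kA22 a r k)^2 + 4 * (kA12 a r k)^2)) = km2 a r k"
    using eventually_gt_at_top[of 0] by eventually_elim (use km2_conj assms in simp)
  have lim: "((\<lambda>k. 2 * (a * (1 - a) * k^2 * (1 + k^2) powr (r - 1)) /
     (kA11 a r k + kA22 a r k + sqrt ((kA11 a r k - kA22 a r k)^2 + 4 * (kA12 a r k)^2))) \<longlongrightarrow> 1 - a) at_top"
    using k_gt_m2'[of "r - 1" a] assms unfolding kA11_def kA12_def kA22_def by simp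
  show ?thesis by (rule Lim_transform_eventually[OF lim ev])
qed

lemma k_lim_m2:
  assumes "0 < r" "0 < a" "a < 1"
  shows "((\<lambda>k. km2 a r k) \<longlongrightarrow> 1 - a) at_top"
  by (rule linorder_cases[of r 1]) (use assms k_lt_m2 k_eq_m2 k_gt_m2 in blast)+

lemma k_lim_w2:
  assumes "0 < r" "0 < a" "a < 1"
  shows "((\<lambda>k. (kA22 a r k - km2 a r k) / (km1 a r k - km2 a r k)) \<longlongrightarrow> 0) at_top"
  by (rule linorder_cases[of r 1]) (use assms k_lt_w2 k_eq_w2 k_gt_w2 in blast)+

lemma k_lim_w2l:
  assumes "0 < r" "0 < a" "a < 1"
  shows "((\<lambda>k. (kA22 a r k - km2 a r k) / (km1 a r k - km2 a r k) * ln (km1 a r k)) \<longlongrightarrow> 0) at_top"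
  by (rule linorder_cases[of r 1]) (use assms k_lt_w2l k_eq_w2l k_gt_w2l in blast)+

lemma k_lim_w1:
  assumes "0 < r" "0 < a" "a < 1"
  shows "((\<lambda>k. (kA11 a r k - km2 a r k) / (km1 a r k - km2 a r k)) \<longlongrightarrow> 1) at_top"
  by (rule linorder_cases[of r 1]) (use assms k_lt_w1 k_eq_w1 k_gt_w1 in blast)+

lemmas k_lims = k_lim_m2 k_lim_w2 k_lim_w2l k_lim_w1

lemma km1_ge: "kA11 a r k \<le> km1 a r k"
proof -
  have "\<bar>kA11 a r k - kA22 a r k\<bar> \<le> sqrt ((kA11 a r k - kA22 a r k)^2 + 4 * (kA12 a r k)^2)"
    by (rule real_le_rsqrt) simp
  hence "kA11 a r k - kA22 a r k \<le> sqrt ((kA11 a r k - kA22 a r k)^2 + 4 * (kA12 a r k)^2)"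
    by (rule abs_le_D1)
  thus ?thesis unfolding km1_def by (simp add: field_simps)
qed

lemma km_diff: "km1 a r k - km2 a r k = sqrt ((kA11 a r k - kA22 a r k)^2 + 4 * (kA12 a r k)^2)"
  unfolding km1_def km2_def by (simp add: field_simps)

lemma kappa_choice:
  assumes "0 < r" "0 < a" "a < 1" "0 < q"
  shows "\<exists>k>0. ln (km2 a r k) + (ln (km1 a r k) - ln (km2 a r k)) / (km1 a r k - km2 a r k) * (kA22 a r k - km2 a r k) < 0
     \<and> km1 a r k powr (1/q) * km2 a r k powr (1/q) <
        km2 a r k powr (1/q) + (km1 a r k powr (1/q) - km2 a r k powr (1/q)) / (km1 a r k - km2 a r k) * (kA11 a r k - km2 a r k)
     \<and> km2 a r k > 0 \<and> km1 a r k > km2 a r k"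
proof -
  note L = k_lim_m2[OF assms(1-3)] k_lim_w2[OF assms(1-3)] k_lim_w2l[OF assms(1-3)] k_lim_w1[OF assms(1-3)]
  define m1 where "m1 = km1 a r" define m2 where "m2 = km2 a r"
  define w2 where "w2 = (\<lambda>k. (kA22 a r k - m2 k) / (m1 k - m2 k))"
  define w1 where "w1 = (\<lambda>k. (kA11 a r k - m2 k) / (m1 k - m2 k))"
  have m2L: "(m2 \<longlongrightarrow> 1 - a) at_top" using L(1) unfolding m2_def by simp
  have lnm2: "((\<lambda>k. ln (m2 k)) \<longlongrightarrow> ln (1 - a)) at_top"
    by (rule tendsto_ln[OF m2L]) (use assms in simp)
  have w2L: "(w2 \<longlongrightarrow> 0) at_top" using L(2) unfolding w2_def m1_def m2_def by simp
  have w2l: "((\<lambda>k. w2 k * ln (m1 k)) \<longlongrightarrow> 0) at_top" using L(3) unfolding w2_def m1_def m2_def by simp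
  have w1L: "(w1 \<longlongrightarrow> 1) at_top" using L(4) unfolding w1_def m1_def m2_def by simp
  have "((\<lambda>k. ln (m2 k) + w2 k * ln (m1 k) - w2 k * ln (m2 k)) \<longlongrightarrow> ln (1 - a) + 0 - 0 * ln (1 - a)) at_top"
    by (intro tendsto_intros lnm2 w2l w2L)
  hence "((\<lambda>k. ln (m2 k) + w2 k * ln (m1 k) - w2 k * ln (m2 k)) \<longlongrightarrow> ln (1 - a)) at_top" by simp
  moreover have "ln (1 - a) < 0" using assms by simp
  ultimately have ev1: "\<forall>\<^sub>F k in at_top. ln (m2 k) + w2 k * ln (m1 k) - w2 k * ln (m2 k) < 0"
    by (rule order_tendstoD(2))
  have ev2: "\<forall>\<^sub>F k in at_top. m2 k > 0"
    by (rule order_tendstoD(1)[OF m2L]) (use assms in simp)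
  have g2L: "((\<lambda>k. m2 k powr (1/q)) \<longlongrightarrow> (1 - a) powr (1/q)) at_top"
    by (rule tendsto_powr[OF m2L tendsto_const]) (use assms in simp)
  have g2lt: "(1 - a) powr (1/q) < 1"
    using powr_less_mono2[of "1/q" "1 - a" 1] assms by simp
  define c where "c = ((1 - a) powr (1/q) + 1) / 2"
  have c: "(1 - a) powr (1/q) < c" "c < 1" using g2lt unfolding c_def by simp_all
  have ev3: "\<forall>\<^sub>F k in at_top. m2 k powr (1/q) < c" by (rule order_tendstoD(2)[OF g2L c(1)])
  have ev4: "\<forall>\<^sub>F k in at_top. c < w1 k" by (rule order_tendstoD(1)[OF w1L c(2)])
  have ev5: "\<forall>\<^sub>F k in at_top. w1 k > 0" by (rule order_tendstoD(1)[OF w1L]) simp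
  have evall: "\<forall>\<^sub>F k in at_top. k > 0 \<and> ln (m2 k) + (ln (m1 k) - ln (m2 k)) / (m1 k - m2 k) * (kA22 a r k - m2 k) < 0
     \<and> m1 k powr (1/q) * m2 k powr (1/q) <
        m2 k powr (1/q) + (m1 k powr (1/q) - m2 k powr (1/q)) / (m1 k - m2 k) * (kA11 a r k - m2 k)
     \<and> m2 k > 0 \<and> m1 k > m2 k"
    using ev1 ev2 ev3 ev4 ev5 eventually_gt_at_top[of 0]
  proof eventually_elim
    case (elim k)
    have w1pos: "w1 k > 0" using elim by simp
    have d: "m1 k - m2 k \<noteq> 0"
    proof
      assume "m1 k - m2 k = 0" thus False using w1pos unfolding w1_def by simp
    qed
    have d': "m1 k - m2 k \<ge> 0" unfolding m1_def m2_def km_diff by simp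
    have gt: "m1 k > m2 k" using d d' by simp
    have A11: "kA11 a r k \<le> m1 k" unfolding m1_def by (rule km1_ge)
    have w1le: "w1 k \<le> 1" unfolding w1_def using A11 gt by (simp add: field_simps)
    have "(ln (m1 k) - ln (m2 k)) / (m1 k - m2 k) * (kA22 a r k - m2 k) = w2 k * ln (m1 k) - w2 k * ln (m2 k)"
      unfolding w2_def by (simp add: diff_divide_distrib algebra_simps)
    hence L1: "ln (m2 k) + (ln (m1 k) - ln (m2 k)) / (m1 k - m2 k) * (kA22 a r k - m2 k) < 0"
      using elim by linarith
    define g1 where "g1 = m1 k powr (1/q)" define g2 where "g2 = m2 k powr (1/q)"
    have g1: "g1 > 0" unfolding g1_def using gt elim by simp
    have g2: "g2 > 0" unfolding g2_def using elim by simp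
    have "(g1 - g2) / (m1 k - m2 k) * (kA11 a r k - m2 k) = (g1 - g2) * w1 k"
      unfolding w1_def by simp
    moreover have "g1 * g2 < g2 + (g1 - g2) * w1 k"
    proof -
      have "g2 < w1 k" using elim unfolding g2_def by simp
      hence "g1 * g2 < g1 * w1 k" using g1 by simp
      moreover have "0 \<le> g2 * (1 - w1 k)" using g2 w1le by simp
      ultimately show ?thesis by (simp add: algebra_simps)
    qed
    ultimately have L2: "g1 * g2 < g2 + (g1 - g2) / (m1 k - m2 k) * (kA11 a r k - m2 k)" by simp
    show ?case using L1 L2 elim gt unfolding g1_def g2_def by simp
  qed
  have "\<exists>k. k > 0 \<and> ln (m2 k) + (ln (m1 k) - ln (m2 k)) / (m1 k - m2 k) * (kA22 a r k - m2 k) < 0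
     \<and> m1 k powr (1/q) * m2 k powr (1/q) <
        m2 k powr (1/q) + (m1 k powr (1/q) - m2 k powr (1/q)) / (m1 k - m2 k) * (kA11 a r k - m2 k)
     \<and> m2 k > 0 \<and> m1 k > m2 k"
    using eventually_happens[OF evall] by simp
  thus ?thesis unfolding m1_def m2_def by blast
qed




lemma mdiag_entry[simp]: "mdiag d $ i $ j = (if i = j then d $ i else 0)"
  by (simp add: mdiag_def)

lemma mul_mdiag_right: "(W ** mdiag d) $ i $ j = W $ i $ j * d $ j"
  by (simp add: matrix_matrix_mult_def mdiag_def if_distrib cong: if_cong)

lemma mul_mdiag_left: "(mdiag d ** W) $ i $ j = d $ i * W $ i $ j"
proof -
  have e: "(\<lambda>k. mdiag d $ i $ k * W $ k $ j) = (\<lambda>k. if k = i then d $ i * W $ i $ j else 0)"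
    by (auto simp: mdiag_def)
  have "(\<Sum>k\<in>UNIV. mdiag d $ i $ k * W $ k $ j) = d $ i * W $ i $ j"
    by (subst e) simp
  thus ?thesis by (simp add: matrix_matrix_mult_def del: mdiag_entry)
qed

lemma orth_TU: "orthogonal_matrix U \<Longrightarrow> transpose U ** U = mat 1"
  by (simp add: orthogonal_matrix_def)
lemma orth_UT: "orthogonal_matrix U \<Longrightarrow> U ** transpose U = mat 1"
  by (simp add: orthogonal_matrix_def)

lemma mfun_unique_aux:
  fixes U V :: "real^'n^'n"
  assumes U: "orthogonal_matrix U" and V: "orthogonal_matrix V"
    and eq: "U ** mdiag d ** transpose U = V ** mdiag e ** transpose V"
  shows "U ** mdiag (\<chi> i. f (d$i)) ** transpose U = V ** mdiag (\<chi> i. f (e$i)) ** transpose V"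
proof -
  define W where "W = transpose V ** U"
  have "transpose V ** (U ** mdiag d ** transpose U) ** U = transpose V ** (V ** mdiag e ** transpose V) ** U"
    using eq by simp
  hence WD: "W ** mdiag d = mdiag e ** W"
    using orth_TU[OF U] orth_TU[OF V] unfolding W_def
    by (simp add: matrix_mul_assoc[symmetric]) (simp add: matrix_mul_assoc)
  have "W ** mdiag (\<chi> i. f (d$i)) = mdiag (\<chi> i. f (e$i)) ** W"
  proof -
    { fix i j
      have "W $ i $ j * d $ j = e $ i * W $ i $ j"
        using arg_cong[OF WD, of "\<lambda>X. X $ i $ j"] by (simp add: mul_mdiag_right mul_mdiag_left)
      hence "W $ i $ j * f (d $ j) = f (e $ i) * W $ i $ j"
        by (cases "W $ i $ j = 0") auto }
    thus ?thesis by (simp add: vec_eq_iff mul_mdiag_right mul_mdiag_left)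
  qed
  hence "V ** (W ** mdiag (\<chi> i. f (d$i))) ** transpose U = V ** (mdiag (\<chi> i. f (e$i)) ** W) ** transpose U"
    by simp
  thus ?thesis
    using orth_UT[OF U] orth_UT[OF V] unfolding W_def
    by (simp add: matrix_mul_assoc) (simp add: matrix_mul_assoc[symmetric])
qed

lemma mfun_eq:
  fixes U :: "real^'n^'n"
  assumes U: "orthogonal_matrix U" and A: "A = U ** mdiag d ** transpose U"
  shows "mfun f A = U ** mdiag (\<chi> i. f (d$i)) ** transpose U"
  unfolding mfun_def
proof (rule the_equality)
  show "\<exists>U' d'. orthogonal_matrix U' \<and> A = U' ** mdiag d' ** transpose U' \<and>
      U ** mdiag (\<chi> i. f (d $ i)) ** transpose U = U' ** mdiag (\<chi> i. f (d' $ i)) ** transpose U'"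
    using U A by blast
next
  fix X assume "\<exists>U' d'. orthogonal_matrix U' \<and> A = U' ** mdiag d' ** transpose U' \<and>
      X = U' ** mdiag (\<chi> i. f (d' $ i)) ** transpose U'"
  then obtain U' d' where "orthogonal_matrix U'" "A = U' ** mdiag d' ** transpose U'"
      "X = U' ** mdiag (\<chi> i. f (d' $ i)) ** transpose U'" by blast
  thus "X = U ** mdiag (\<chi> i. f (d $ i)) ** transpose U"
    using mfun_unique_aux[OF \<open>orthogonal_matrix U'\<close> U, of d' d f] A by simp
qed




definition mk2 :: "real \<Rightarrow> real \<Rightarrow> real \<Rightarrow> real \<Rightarrow> real^2^2" where
  "mk2 a b c d = vector [vector [a, b], vector [c, d]]"

lemma mk2_entries[simp]:
  "mk2 a b c d $ 1 $ 1 = a" "mk2 a b c d $ 1 $ 2 = b" "mk2 a b c d $ 2 $ 1 = c" "mk2 a b c d $ 2 $ 2 = d"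
  by (simp_all add: mk2_def)

lemma m2_eq_iff: "(X::real^2^2) = Y \<longleftrightarrow>
    X$1$1 = Y$1$1 \<and> X$1$2 = Y$1$2 \<and> X$2$1 = Y$2$1 \<and> X$2$2 = Y$2$2"
  by (simp add: vec_eq_iff forall_2)

lemma v2_eq_iff: "(x::real^2) = y \<longleftrightarrow> x$1 = y$1 \<and> x$2 = y$2"
  by (simp add: vec_eq_iff forall_2)

lemma mmult2[simp]: "((X::real^2^2) ** Y) $ i $ j = X$i$1 * Y$1$j + X$i$2 * Y$2$j"
  by (simp add: matrix_matrix_mult_def sum_2)

lemma transpose_entry[simp]: "transpose (X::real^'n^'n) $ i $ j = X $ j $ i"
  by (simp add: transpose_def)

lemma mat1_entry[simp]: "(mat 1 :: real^'n^'n) $ i $ j = (if i = j then 1 else 0)"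
  by (simp add: mat_def)

lemma mvmult2[simp]: "((X::real^2^2) *v v) $ i = X$i$1 * v$1 + X$i$2 * v$2"
  by (simp add: matrix_vector_mult_def sum_2)

lemma inner2: "(u::real^2) \<bullet> w = u$1*w$1 + u$2*w$2"
  by (simp add: inner_vec_def sum_2)

lemma qf2: "(u::real^2) \<bullet> (X *v u) = u$1*(X$1$1*u$1 + X$1$2*u$2) + u$2*(X$2$1*u$1 + X$2$2*u$2)"
  by (simp add: inner2)

lemma one_neq_two2[simp]: "(1::2) \<noteq> 2" "(2::2) \<noteq> 1"
  by (simp_all add: exhaust_2)

lemma vector2_entries[simp]: "(vector [x, y] :: real^2) $ 1 = x" "(vector [x, y] :: real^2) $ 2 = y"
  by simp_all

definition rot :: "real \<Rightarrow> real \<Rightarrow> real^2^2" where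
  "rot C S = mk2 C (-S) S C"

lemma rot_orth: "C^2 + S^2 = 1 \<Longrightarrow> orthogonal_matrix (rot C S)"
  unfolding orthogonal_matrix_def rot_def
  by (simp add: m2_eq_iff power2_eq_square algebra_simps)

lemma rot_conj: "rot C S ** mdiag (vector [x, y]) ** transpose (rot C S) =
    mk2 (C*C*x + S*S*y) (C*S*(x - y)) (C*S*(x - y)) (S*S*x + C*C*y)"
  unfolding rot_def by (simp add: m2_eq_iff algebra_simps)

definition disc2 :: "real^2^2 \<Rightarrow> real" where
  "disc2 S = (S$1$1 - S$2$2)^2 + 4 * (S$1$2)^2"
definition ev1 :: "real^2^2 \<Rightarrow> real" where
  "ev1 S = (S$1$1 + S$2$2 + sqrt (disc2 S)) / 2"
definition ev2 :: "real^2^2 \<Rightarrow> real" where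
  "ev2 S = (S$1$1 + S$2$2 - sqrt (disc2 S)) / 2"

lemma disc2_nonneg: "0 \<le> disc2 S" by (simp add: disc2_def)

lemma sym2: "transpose (S::real^2^2) = S \<Longrightarrow> S$2$1 = S$1$2"
  by (metis transpose_entry)

lemma spec2:
  fixes S :: "real^2^2"
  assumes sym: "transpose S = S"
  shows "\<exists>C Sn. C^2 + Sn^2 = 1 \<and> S = rot C Sn ** mdiag (vector [ev1 S, ev2 S]) ** transpose (rot C Sn)"
proof (cases "disc2 S = 0")
  case True
  hence "(S$1$1 - S$2$2)^2 + (2*S$1$2)^2 = 0" unfolding disc2_def by (simp add: power_mult_distrib)
  hence "S$1$1 - S$2$2 = 0" "2*S$1$2 = 0" using sum_power2_eq_zero_iff by blast+
  hence "S$1$1 = S$2$2" "S$1$2 = 0" by simp_all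
  moreover have "S$2$1 = S$1$2" using sym2[OF sym] .
  ultimately show ?thesis using True
    by (intro exI[of _ 1] exI[of _ 0]) (simp add: rot_conj m2_eq_iff ev1_def ev2_def)
next
  case False
  define R where "R = sqrt (disc2 S)"
  have "disc2 S > 0" using False disc2_nonneg[of S] by linarith
  hence R: "R > 0" unfolding R_def by simp
  have RR: "R^2 = (S$1$1 - S$2$2)^2 + 4 * (S$1$2)^2"
    unfolding R_def disc2_def by simp
  have "((S$1$1 - S$2$2)/R)^2 + (2*S$1$2/R)^2 = 1"
    using R RR by (simp add: power_divide field_simps power2_eq_square)
  then obtain phi where ph: "(S$1$1 - S$2$2)/R = cos phi" "2*S$1$2/R = sin phi"
    using sincos_total_2pi by metis
  define C where "C = cos (phi/2)"
  define Sn where "Sn = sin (phi/2)"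
  have C1: "C^2 + Sn^2 = 1" unfolding C_def Sn_def by simp
  have C2: "C^2 - Sn^2 = (S$1$1 - S$2$2)/R"
    using ph cos_double[of "phi/2"] unfolding C_def Sn_def by simp
  have C3: "2*C*Sn = 2*S$1$2/R"
    using ph sin_double[of "phi/2"] unfolding C_def Sn_def by (simp add: mult.commute)
  have e1: "ev1 S = (S$1$1 + S$2$2 + R)/2" and e2: "ev2 S = (S$1$1 + S$2$2 - R)/2"
    unfolding ev1_def ev2_def R_def by simp_all
  define X where "X = (S$1$1 - S$2$2)/R"
  have C1': "C*C + Sn*Sn = 1" using C1 by (simp add: power2_eq_square)
  have C2': "C*C - Sn*Sn = X" using C2 by (simp add: X_def power2_eq_square)
  have cc1: "C*C = (1 + X)/2" using C1' C2' by simp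
  have cc2: "Sn*Sn = (1 - X)/2" using C1' C2' by simp
  note cc = cc1 cc2
  have cs: "C*Sn = S$1$2/R" using C3 by simp
  have XR: "X * R = S$1$1 - S$2$2" using R unfolding X_def by simp
  have E11: "C*C*ev1 S + Sn*Sn*ev2 S = S$1$1"
  proof -
    have "C*C*ev1 S + Sn*Sn*ev2 S = (C*C+Sn*Sn)*(S$1$1+S$2$2)/2 + (C*C - Sn*Sn)*R/2"
      unfolding e1 e2 by (simp add: field_simps)
    thus ?thesis using C1' C2' XR by (simp add: mult.commute) (simp add: field_simps)
  qed
  have E22: "Sn*Sn*ev1 S + C*C*ev2 S = S$2$2"
  proof -
    have "Sn*Sn*ev1 S + C*C*ev2 S = (C*C+Sn*Sn)*(S$1$1+S$2$2)/2 - (C*C - Sn*Sn)*R/2"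
      unfolding e1 e2 by (simp add: field_simps)
    thus ?thesis using C1' C2' XR by (simp add: mult.commute) (simp add: field_simps)
  qed
  have E12: "C*Sn*(ev1 S - ev2 S) = S$1$2"
    using cs R unfolding e1 e2 by (simp add: field_simps)
  have "S = rot C Sn ** mdiag (vector [ev1 S, ev2 S]) ** transpose (rot C Sn)"
    unfolding rot_conj m2_eq_iff mk2_entries using E11 E22 E12 sym2[OF sym] by simp
  thus ?thesis using C1 by blast
qed

lemma spec_exists:
  fixes S :: "real^2^2"
  assumes "transpose S = S"
  shows "\<exists>U d. orthogonal_matrix U \<and> S = U ** mdiag d ** transpose U"
  using spec2[OF assms] rot_orth by blast

definition Phi :: "(real \<Rightarrow> real) \<Rightarrow> real^2^2 \<Rightarrow> real^2^2" where
  "Phi g S = g (ev2 S) *\<^sub>R mat 1 + ((g (ev1 S) - g (ev2 S)) / (ev1 S - ev2 S)) *\<^sub>R (S - ev2 S *\<^sub>R mat 1)"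

lemma Phi_entry: "Phi g S $ i $ j = (if i = j then g (ev2 S) else 0) +
   ((g (ev1 S) - g (ev2 S)) / (ev1 S - ev2 S)) * (S $ i $ j - (if i = j then ev2 S else 0))"
  by (simp add: Phi_def)

lemma ev_diff: "ev1 S - ev2 S = sqrt (disc2 S)"
  unfolding ev1_def ev2_def by (simp add: field_simps)

lemma mfun_Phi:
  fixes S :: "real^2^2"
  assumes sym: "transpose S = S" and d: "0 < disc2 S"
  shows "mfun g S = Phi g S"
proof -
  obtain C Sn where C: "C^2 + Sn^2 = 1"
    and S: "S = rot C Sn ** mdiag (vector [ev1 S, ev2 S]) ** transpose (rot C Sn)"
    using spec2[OF sym] by blast
  have "mfun g S = rot C Sn ** mdiag (\<chi> i. g (vector [ev1 S, ev2 S] $ i)) ** transpose (rot C Sn)"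
    by (rule mfun_eq[OF rot_orth[OF C] S])
  also have "(\<chi> i. g (vector [ev1 S, ev2 S] $ i)) = (vector [g (ev1 S), g (ev2 S)] :: real^2)"
    by (simp add: v2_eq_iff)
  finally have mf: "mfun g S = mk2 (C*C*g (ev1 S) + Sn*Sn*g (ev2 S)) (C*Sn*(g (ev1 S) - g (ev2 S)))
      (C*Sn*(g (ev1 S) - g (ev2 S))) (Sn*Sn*g (ev1 S) + C*C*g (ev2 S))"
    by (simp add: rot_conj)
  have Se: "S = mk2 (C*C*ev1 S + Sn*Sn*ev2 S) (C*Sn*(ev1 S - ev2 S))
      (C*Sn*(ev1 S - ev2 S)) (Sn*Sn*ev1 S + C*C*ev2 S)"
    using S by (simp add: rot_conj)
  have ne: "ev1 S - ev2 S \<noteq> 0" using d by (simp add: ev_diff)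
  have SS: "Sn*Sn = 1 - C*C" using C by (simp add: power2_eq_square)
  have s11: "S$1$1 = C*C*ev1 S + Sn*Sn*ev2 S" using arg_cong[OF Se, of "\<lambda>X. X$1$1"] by simp
  have s22: "S$2$2 = Sn*Sn*ev1 S + C*C*ev2 S" using arg_cong[OF Se, of "\<lambda>X. X$2$2"] by simp
  have s12: "S$1$2 = C*Sn*(ev1 S - ev2 S)" using arg_cong[OF Se, of "\<lambda>X. X$1$2"] by simp
  have s21: "S$2$1 = C*Sn*(ev1 S - ev2 S)" using arg_cong[OF Se, of "\<lambda>X. X$2$1"] by simp
  define k where "k = (g (ev1 S) - g (ev2 S)) / (ev1 S - ev2 S)"
  have k: "k * (ev1 S - ev2 S) = g (ev1 S) - g (ev2 S)" unfolding k_def using ne by simp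
  have t11: "S$1$1 - ev2 S = C*C*(ev1 S - ev2 S)" unfolding s11 SS by (simp add: algebra_simps)
  have t22: "S$2$2 - ev2 S = Sn*Sn*(ev1 S - ev2 S)" unfolding s22 SS by (simp add: algebra_simps)
  have kk1: "k * (C*C*(ev1 S - ev2 S)) = C*C*(g (ev1 S) - g (ev2 S))"
    using k by (metis mult.commute mult.left_commute)
  have kk2: "k * (Sn*Sn*(ev1 S - ev2 S)) = Sn*Sn*(g (ev1 S) - g (ev2 S))"
    using k by (metis mult.commute mult.left_commute)
  have "C*C*g (ev1 S) + Sn*Sn*g (ev2 S) = g (ev2 S) + k * (S$1$1 - ev2 S)"
    unfolding t11 kk1 SS by (simp add: algebra_simps)
  moreover have "Sn*Sn*g (ev1 S) + C*C*g (ev2 S) = g (ev2 S) + k * (S$2$2 - ev2 S)"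
    unfolding t22 kk2 unfolding SS by (simp add: algebra_simps)
  moreover have "C*Sn*(g (ev1 S) - g (ev2 S)) = k * S$1$2"
    unfolding s12 using k by (metis mult.assoc mult.commute)
  moreover have "C*Sn*(g (ev1 S) - g (ev2 S)) = k * S$2$1"
    unfolding s21 using k by (metis mult.assoc mult.commute)
  ultimately show ?thesis
    unfolding mf m2_eq_iff Phi_entry k_def[symmetric] by simp
qed




declare transpose_matrix_vector[simp del] vector_transpose_matrix[simp del]

definition sd :: "real^'n^'n \<Rightarrow> real^'n \<Rightarrow> real^'n^'n" where
  "sd U d = U ** mdiag d ** transpose U"

lemma mdiag_mult: "mdiag d1 ** mdiag d2 = mdiag (\<chi> i. d1$i * d2$i)"
  by (simp add: vec_eq_iff mul_mdiag_right)

lemma transpose_mdiag[simp]: "transpose (mdiag d) = mdiag d"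
  by (simp add: vec_eq_iff)

lemma mdiag_one: "mdiag (\<chi> i. 1) = (mat 1 :: real^'n^'n)"
  by (simp add: vec_eq_iff)

lemma sd_mult:
  assumes "orthogonal_matrix U"
  shows "sd U d1 ** sd U d2 = sd U (\<chi> i. d1$i * d2$i)"
proof -
  have "sd U d1 ** sd U d2 = U ** mdiag d1 ** (transpose U ** U) ** mdiag d2 ** transpose U"
    unfolding sd_def by (simp add: matrix_mul_assoc)
  also have "\<dots> = U ** (mdiag d1 ** mdiag d2) ** transpose U"
    using orth_TU[OF assms] by (simp add: matrix_mul_assoc)
  finally show ?thesis by (simp add: mdiag_mult sd_def)
qed

lemma sd_transpose: "transpose (sd U d) = sd U d"
  unfolding sd_def by (simp add: matrix_transpose_mul matrix_mul_assoc)

lemma sd_one: "orthogonal_matrix U \<Longrightarrow> sd U (\<chi> i. 1) = mat 1"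
  unfolding sd_def mdiag_one using orth_UT by simp

lemma sd_qf:
  fixes U :: "real^'n^'n"
  shows "v \<bullet> (sd U g *v v) = (\<Sum>i\<in>UNIV. g$i * ((transpose U *v v)$i)^2)"
proof -
  define w where "w = transpose U *v v"
  have "sd U g *v v = U *v (mdiag g *v w)"
    unfolding sd_def w_def by (simp add: matrix_vector_mul_assoc matrix_mul_assoc)
  hence "v \<bullet> (sd U g *v v) = (v v* U) \<bullet> (mdiag g *v w)"
    by (simp add: dot_lmul_matrix)
  also have "v v* U = w" unfolding w_def
    by (metis transpose_transpose vector_transpose_matrix)
  also have "w \<bullet> (mdiag g *v w) = (\<Sum>i\<in>UNIV. g$i * (w$i)^2)"
  proof -
    have "\<And>i. (mdiag g *v w) $ i = g$i * w$i"
    proof -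
      fix i
      have e: "(\<lambda>j. mdiag g $ i $ j * w $ j) = (\<lambda>j. if j = i then g$i * w$i else 0)"
        by (auto simp: mdiag_def)
      have "(\<Sum>j\<in>UNIV. mdiag g $ i $ j * w $ j) = g$i * w$i"
        by (subst e) simp
      thus "(mdiag g *v w) $ i = g$i * w$i"
        by (simp add: matrix_vector_mult_def del: mdiag_entry)
    qed
    thus ?thesis by (simp add: inner_vec_def power2_eq_square algebra_simps)
  qed
  finally show ?thesis unfolding w_def .
qed

lemma orth_vec_nz:
  fixes U :: "real^'n^'n"
  assumes "orthogonal_matrix U" "v \<noteq> 0"
  shows "transpose U *v v \<noteq> 0"
proof
  assume "transpose U *v v = 0"
  hence "U *v (transpose U *v v) = 0" by simp
  hence "v = 0" using orth_UT[OF assms(1)] by (simp add: matrix_vector_mul_assoc)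
  thus False using assms(2) by simp
qed

lemma sd_pos_def:
  fixes U :: "real^'n^'n"
  assumes U: "orthogonal_matrix U" and g: "\<forall>i. g$i > 0"
  shows "pos_def (sd U g)"
  unfolding pos_def_def
proof (intro conjI allI impI)
  show "transpose (sd U g) = sd U g" by (rule sd_transpose)
  fix v :: "real^'n" assume "v \<noteq> 0"
  then obtain j where j: "(transpose U *v v)$j \<noteq> 0"
    using orth_vec_nz[OF U] by (metis vec_eq_iff zero_index)
  have "0 < g$j * ((transpose U *v v)$j)^2" using g j by simp
  also have "\<dots> \<le> (\<Sum>i\<in>UNIV. g$i * ((transpose U *v v)$i)^2)"
    by (rule member_le_sum) (use g in \<open>auto simp: less_imp_le\<close>)
  finally show "0 < v \<bullet> (sd U g *v v)" by (simp add: sd_qf)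
qed

lemma pos_def_eig:
  fixes U :: "real^'n^'n"
  assumes U: "orthogonal_matrix U" and S: "S = sd U d" and pd: "pos_def S"
  shows "d$i > 0"
proof -
  define v where "v = U *v axis i 1"
  have nz: "v \<noteq> 0"
  proof
    assume "v = 0"
    hence "transpose U *v v = 0" by simp
    hence "axis i 1 = (0::real^'n)" using orth_TU[OF U] unfolding v_def
      by (simp add: matrix_vector_mul_assoc)
    thus False by (simp add: axis_eq_0_iff)
  qed
  have w: "transpose U *v v = axis i 1" using orth_TU[OF U] unfolding v_def
    by (simp add: matrix_vector_mul_assoc)
  have e: "(\<lambda>j. d$j * ((axis i 1 :: real^'n)$j)^2) = (\<lambda>j. if j = i then d$i else 0)"
    by (auto simp: axis_def)
  have "v \<bullet> (S *v v) = d$i"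
    unfolding S sd_qf w e by simp
  thus ?thesis using pd nz unfolding pos_def_def by auto
qed

lemma mfun_sd: "orthogonal_matrix U \<Longrightarrow> mfun f (sd U d) = sd U (\<chi> i. f (d$i))"
  unfolding sd_def by (rule mfun_eq) auto

lemma sym_sd_exists:
  fixes S :: "real^2^2"
  assumes "transpose S = S"
  obtains U d where "orthogonal_matrix U" "S = sd U d"
  using spec_exists[OF assms] unfolding sd_def by blast

lemma pd_sd_exists:
  fixes S :: "real^2^2"
  assumes "pos_def S"
  obtains U d where "orthogonal_matrix U" "S = sd U d" "\<forall>i. d$i > 0"
proof -
  have "transpose S = S" using assms unfolding pos_def_def by simp
  then obtain U d where "orthogonal_matrix U" "S = sd U d" by (rule sym_sd_exists)
  thus ?thesis using pos_def_eig[OF _ _ assms] that by blast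
qed

lemma pd_mfun:
  fixes S :: "real^2^2"
  assumes "pos_def S" "\<And>x. x > 0 \<Longrightarrow> f x > 0"
  shows "pos_def (mfun f S)"
proof -
  obtain U d where "orthogonal_matrix U" "S = sd U d" "\<forall>i. d$i > 0"
    using pd_sd_exists[OF assms(1)] by blast
  thus ?thesis using assms(2) by (simp add: mfun_sd sd_pos_def)
qed

lemma mfun_comp_pd:
  fixes S :: "real^2^2"
  assumes "pos_def S" "\<And>x. x > 0 \<Longrightarrow> g (f x) = h x"
  shows "mfun g (mfun f S) = mfun h S"
proof -
  obtain U d where U: "orthogonal_matrix U" "S = sd U d" "\<forall>i. d$i > 0"
    using pd_sd_exists[OF assms(1)] by blast
  have "(\<chi> i. g ((\<chi> i. f (d $ i)) $ i)) = (\<chi> i. h (d$i))"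
    using U(3) assms(2) by (simp add: vec_eq_iff)
  thus ?thesis using U by (simp add: mfun_sd)
qed

lemma matrix_inv_eq:
  fixes A B :: "real^'n^'n"
  assumes "A ** B = mat 1" "B ** A = mat 1"
  shows "matrix_inv A = B"
proof -
  have ex: "\<exists>B'. A ** B' = mat 1 \<and> B' ** A = mat 1" using assms by blast
  have "A ** matrix_inv A = mat 1 \<and> matrix_inv A ** A = mat 1"
    unfolding matrix_inv_def by (rule someI_ex[OF ex])
  hence "matrix_inv A = matrix_inv A ** (A ** B)" using assms by simp
  also have "\<dots> = B" using \<open>A ** matrix_inv A = mat 1 \<and> matrix_inv A ** A = mat 1\<close>
    by (simp add: matrix_mul_assoc)
  finally show ?thesis .
qed

lemma sd_inv:
  assumes U: "orthogonal_matrix U" and d: "\<forall>i. d$i \<noteq> 0"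
  shows "matrix_inv (sd U d) = sd U (\<chi> i. 1 / d$i)"
proof (rule matrix_inv_eq)
  have e1: "(\<chi> i. d$i * (\<chi> i. 1/d$i)$i) = (\<chi> i. 1)" and e2: "(\<chi> i. (\<chi> i. 1/d$i)$i * d$i) = (\<chi> i. 1)"
    using d by (simp_all add: vec_eq_iff)
  show "sd U d ** sd U (\<chi> i. 1 / d$i) = mat 1"
    unfolding sd_mult[OF U] e1 sd_one[OF U] ..
  show "sd U (\<chi> i. 1 / d$i) ** sd U d = mat 1"
    unfolding sd_mult[OF U] e2 sd_one[OF U] ..
qed




lemma mpow_sd: "orthogonal_matrix U \<Longrightarrow> mpow (sd U d) t = sd U (\<chi> i. d$i powr t)"
  unfolding mpow_def by (rule mfun_sd)

lemma mpow_sq_half: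
  fixes S :: "real^2^2"
  assumes "pos_def S"
  shows "mpow (S ** S) (1/2) = S"
proof -
  obtain U d where U: "orthogonal_matrix U" "S = sd U d" "\<forall>i. d$i > 0"
    using pd_sd_exists[OF assms] by blast
  have "S ** S = sd U (\<chi> i. d$i * d$i)" using U by (simp add: sd_mult)
  moreover have "(\<chi> i. (\<chi> i. d$i * d$i)$i powr (1/2)) = d"
    using U(3) by (simp add: vec_eq_iff powr_half_sqrt less_imp_le)
  ultimately show ?thesis using U by (simp add: mpow_sd)
qed

lemma inner_sym: "transpose A = A \<Longrightarrow> (v::real^'n) \<bullet> (A *v w) = (A *v v) \<bullet> w"
  by (metis dot_lmul_matrix transpose_transpose vector_transpose_matrix)

lemma pos_def_sym: "pos_def A \<Longrightarrow> transpose A = A"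
  by (simp add: pos_def_def)

lemma congr_pd:
  fixes H G :: "real^'n^'n"
  assumes H: "transpose H = H" and Hi: "H' ** H = mat 1" and G: "pos_def G"
  shows "pos_def (H ** G ** H)"
  unfolding pos_def_def
proof (intro conjI allI impI)
  show "transpose (H ** G ** H) = H ** G ** H"
    using H pos_def_sym[OF G] by (simp add: matrix_transpose_mul matrix_mul_assoc)
  fix v :: "real^'n" assume v: "v \<noteq> 0"
  have "H *v v \<noteq> 0"
  proof
    assume "H *v v = 0"
    hence "H' *v (H *v v) = 0" by simp
    thus False using Hi v by (simp add: matrix_vector_mul_assoc)
  qed
  hence "0 < (H *v v) \<bullet> (G *v (H *v v))" using G unfolding pos_def_def by blast
  also have "\<dots> = v \<bullet> ((H ** G ** H) *v v)"
    using inner_sym[OF H] by (simp add: matrix_vector_mul_assoc[symmetric])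
  finally show "0 < v \<bullet> ((H ** G ** H) *v v)" .
qed

lemma gmean_char:
  fixes X G Y :: "real^2^2"
  assumes X: "pos_def X" and G: "pos_def G" and Y: "Y = G ** matrix_inv X ** G"
  shows "gmean X Y = G"
proof -
  obtain U d where U: "orthogonal_matrix U" "X = sd U d" "\<forall>i. d$i > 0"
    using pd_sd_exists[OF X] by blast
  define H where "H = sd U (\<chi> i. d$i powr (1/2))"
  define Hi where "Hi = sd U (\<chi> i. d$i powr (-1/2))"
  have nz: "\<forall>i. d$i \<noteq> 0" using U(3) by (metis less_irrefl)
  have nz': "\<And>i. d$i \<noteq> 0" using nz by blast
  have mH: "mpow X (1/2) = H" "mpow X (-1/2) = Hi"
    unfolding H_def Hi_def using U by (simp_all add: mpow_sd)
  have e1: "(\<chi> i. (\<chi> i. d$i powr (1/2))$i * (\<chi> i. d$i powr (-1/2))$i) = (\<chi> i. 1)"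
    "(\<chi> i. (\<chi> i. d$i powr (-1/2))$i * (\<chi> i. d$i powr (1/2))$i) = (\<chi> i. 1)"
    using nz' by (simp_all add: vec_eq_iff powr_add[symmetric])
  have HHi: "H ** Hi = mat 1" "Hi ** H = mat 1"
    unfolding H_def Hi_def sd_mult[OF U(1)] e1 sd_one[OF U(1)] by simp_all
  have e2: "(\<chi> i. (\<chi> i. d$i powr (-1/2))$i * (\<chi> i. d$i powr (-1/2))$i) = (\<chi> i. 1 / d$i)"
    using nz' U(3) by (simp add: vec_eq_iff powr_add[symmetric] powr_minus_divide less_imp_le)
  have inv: "matrix_inv X = Hi ** Hi"
    unfolding U(2) sd_inv[OF U(1) nz] Hi_def sd_mult[OF U(1)] e2 ..
  define T where "T = Hi ** G ** Hi"
  have HiS: "transpose Hi = Hi" unfolding Hi_def by (rule sd_transpose)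
  have Tpd: "pos_def T" unfolding T_def by (rule congr_pd[OF HiS HHi(1) G])
  have "Hi ** Y ** Hi = T ** T"
    unfolding Y inv T_def by (simp add: matrix_mul_assoc)
  hence "gmean X Y = H ** T ** H"
    unfolding gmean_def mH using mpow_sq_half[OF Tpd] by simp
  also have "\<dots> = (H ** Hi) ** G ** (Hi ** H)"
    unfolding T_def by (simp add: matrix_mul_assoc)
  finally show ?thesis using HHi by simp
qed

lemma mpow_mdiag: "mpow (mdiag d) t = mdiag (\<chi> i. d$i powr t)"
proof -
  have "mdiag d = sd (mat 1) d" by (simp add: sd_def)
  thus ?thesis using mpow_sd[OF orthogonal_matrix_id] by (simp add: sd_def)
qed




lemma pd_inv:
  fixes X :: "real^2^2"
  assumes "pos_def X"
  shows "pos_def (matrix_inv X)" "matrix_inv (matrix_inv X) = X"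
proof -
  obtain U d where U: "orthogonal_matrix U" "X = sd U d" "\<forall>i. d$i > 0"
    using pd_sd_exists[OF assms] by blast
  have nz: "\<forall>i. d$i \<noteq> 0" using U(3) by (metis less_irrefl)
  have I: "matrix_inv X = sd U (\<chi> i. 1 / d$i)" using sd_inv[OF U(1) nz] U(2) by simp
  show "pos_def (matrix_inv X)" unfolding I by (rule sd_pos_def[OF U(1)]) (use U(3) in simp)
  have nz2: "\<forall>i. (\<chi> i. 1 / d$i) $ i \<noteq> 0" using nz by simp
  have "(\<chi> i. 1 / (\<chi> i. 1 / d$i) $ i) = d" by (simp add: vec_eq_iff)
  moreover have "matrix_inv (matrix_inv X) = sd U (\<chi> i. 1 / (\<chi> i. 1 / d$i) $ i)"
    using I sd_inv[OF U(1) nz2] by simp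
  ultimately show "matrix_inv (matrix_inv X) = X" using U(2) by simp
qed

lemma pd_comb:
  fixes X Y :: "real^2^2"
  assumes X: "pos_def X" and Y: "pos_def Y" and ab: "a > 0" "b > 0"
  shows "pos_def (a *\<^sub>R X + b *\<^sub>R Y)"
  unfolding pos_def_def
proof (intro conjI allI impI)
  show "transpose (a *\<^sub>R X + b *\<^sub>R Y) = a *\<^sub>R X + b *\<^sub>R Y"
    using sym2[OF pos_def_sym[OF X]] sym2[OF pos_def_sym[OF Y]] by (simp add: m2_eq_iff)
  fix v :: "real^2" assume v: "v \<noteq> 0"
  have "v \<bullet> ((a *\<^sub>R X + b *\<^sub>R Y) *v v) = a * (v \<bullet> (X *v v)) + b * (v \<bullet> (Y *v v))"
    by (simp add: qf2 algebra_simps)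
  moreover have "v \<bullet> (X *v v) > 0" "v \<bullet> (Y *v v) > 0" using X Y v unfolding pos_def_def by auto
  moreover have "0 < a * (v \<bullet> (X *v v)) + b * (v \<bullet> (Y *v v))"
    using ab calculation(2,3) by (intro add_pos_pos mult_pos_pos)
  ultimately show "0 < v \<bullet> ((a *\<^sub>R X + b *\<^sub>R Y) *v v)" by simp
qed

lemma pd_mdiag2: "x > 0 \<Longrightarrow> y > 0 \<Longrightarrow> pos_def (mdiag (vector [x, y] :: real^2))"
proof -
  assume "x > 0" "y > 0"
  hence "pos_def (sd (mat 1) (vector [x, y] :: real^2))"
    by (intro sd_pos_def orthogonal_matrix_id) (simp add: forall_2)
  thus ?thesis by (simp add: sd_def)
qed

lemma mdiag2_conj: "mdiag (vector [x, y] :: real^2) ** S ** mdiag (vector [x, y]) =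
   mk2 (x*x*S$1$1) (x*y*S$1$2) (x*y*S$2$1) (y*y*S$2$2)"
  by (simp add: m2_eq_iff algebra_simps)

lemma mdiag2_mult: "mdiag (vector [x, y] :: real^2) ** mdiag (vector [x', y']) = mdiag (vector [x*x', y*y'])"
  by (simp add: m2_eq_iff)

lemma mdiag2_one: "mdiag (vector [1, 1] :: real^2) = mat 1"
  by (simp add: m2_eq_iff)

definition cc :: "real \<Rightarrow> real \<Rightarrow> real \<Rightarrow> real" where "cc al k t = k * t powr (1 - al)"
definition ss :: "real \<Rightarrow> real \<Rightarrow> real \<Rightarrow> real" where "ss al k t = sqrt (1 - (cc al k t)^2)"

definition Fm :: "real \<Rightarrow> real \<Rightarrow> real \<Rightarrow> real^2^2" where
  "Fm al k t = (let c = cc al k t; w = ss al k t in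
     mk2 (c*c + t*t*(w*w)) (c*w*(1 - t*t)) (c*w*(1 - t*t)) (w*w + t*t*(c*c)))"
definition am :: "real \<Rightarrow> real \<Rightarrow> real \<Rightarrow> real^2^2" where
  "am al k t = (let c = cc al k t; w = ss al k t; e = t powr al in
     mk2 (k*k*(t*t) + e*e*(t*t)*(w*w)) (k*t*w*(1 - t*t)) (k*t*w*(1 - t*t)) (w*w + t*t*(c*c)))"
definition bm :: "real \<Rightarrow> real \<Rightarrow> real \<Rightarrow> real^2^2" where
  "bm al k t = (let c = cc al k t; w = ss al k t; e = t powr al in
     mk2 (k*k + e*e*(w*w)) (k*w*(1 - t*t)) (k*w*(1 - t*t)) (w*w + t*t*(c*c)))"
definition Gm :: "real \<Rightarrow> real^2^2" where "Gm t = mdiag (vector [1/t, 1])"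

locale cons =
  fixes al k t :: real
  assumes al: "0 < al" "al < 1" and k: "0 < k" and t: "0 < t" "t < 1" and c1: "cc al k t < 1"
begin

abbreviation "c \<equiv> cc al k t"
abbreviation "w \<equiv> ss al k t"
abbreviation "e \<equiv> t powr al"

lemma c_pos: "c > 0" unfolding cc_def using k t by simp
lemma c2: "c^2 < 1"
proof -
  have "c*c < 1*1" by (rule mult_strict_mono) (use c_pos c1 in auto)
  thus ?thesis by (simp add: power2_eq_square)
qed
lemma cs1: "c*c + w*w = 1"
  using c2 unfolding ss_def by (simp add: power2_eq_square)
lemma w_pos: "w > 0"
  using c2 unfolding ss_def by simp
lemma e_pos: "e > 0" using t by simp
lemma ce: "c * e = k * t"
  unfolding cc_def using t by (simp add: mult.assoc powr_add[symmetric])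

lemma Fm_sd: "Fm al k t = sd (rot c w) (vector [1, t*t])"
  unfolding Fm_def sd_def Let_def rot_conj by (simp add: m2_eq_iff algebra_simps)

lemma U_orth: "orthogonal_matrix (rot c w)"
  by (rule rot_orth) (use cs1 in \<open>simp add: power2_eq_square\<close>)

lemma Fm_pd: "pos_def (Fm al k t)"
proof -
  have "\<forall>i. (vector [1, t*t] :: real^2)$i > 0" using t by (simp add: forall_2)
  thus ?thesis unfolding Fm_sd by (rule sd_pos_def[OF U_orth])
qed

lemma am_eq: "am al k t = mdiag (vector [e, 1]) ** Fm al k t ** mdiag (vector [e, 1])"
proof -
  have ce2: "e*e*(c*c) = k*k*(t*t)"
  proof -
    have "e*e*(c*c) = (c*e)*(c*e)" by (simp add: algebra_simps)
    thus ?thesis using ce by simp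
  qed
  have "e*e*(c*c + t*t*(w*w)) = k*k*(t*t) + e*e*(t*t)*(w*w)"
    using ce2 by (simp add: algebra_simps)
  moreover have "e*(c*w*(1 - t*t)) = k*t*w*(1 - t*t)"
  proof -
    have "e*(c*w*(1 - t*t)) = (c*e)*w*(1 - t*t)" by (simp add: algebra_simps)
    thus ?thesis using ce by simp
  qed
  moreover have "k * t = e * c" using ce by (simp add: mult.commute)
  ultimately show ?thesis unfolding am_def Fm_def Let_def mdiag2_conj by (simp add: m2_eq_iff)
qed

lemma am_pd: "pos_def (am al k t)"
proof -
  have ee: "1/e * e = 1" using e_pos by simp
  have "mdiag (vector [1/e, 1] :: real^2) ** mdiag (vector [e, 1]) = mat 1"
    unfolding mdiag2_mult ee by (simp add: mdiag2_one)
  from congr_pd[OF _ this Fm_pd] show ?thesis unfolding am_eq by simp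
qed

lemma bm_eq: "bm al k t = Gm t ** am al k t ** Gm t"
proof -
  have "1/t*(1/t)*(k*k*(t*t) + e*e*(t*t)*(w*w)) = k*k + e*e*(w*w)" using t by (simp add: field_simps)
  moreover have "1/t*1*(k*t*w*(1 - t*t)) = k*w*(1 - t*t)" using t by (simp add: field_simps)
  ultimately show ?thesis unfolding bm_def am_def Gm_def Let_def mdiag2_conj by (simp add: m2_eq_iff)
qed

lemma Gm_pd: "pos_def (Gm t)" unfolding Gm_def by (rule pd_mdiag2) (use t in simp_all)

lemma bm_pd: "pos_def (bm al k t)"
proof -
  have "mdiag (vector [t, 1] :: real^2) ** Gm t = mat 1"
    using t by (simp add: Gm_def mdiag2_mult mdiag2_one)
  from congr_pd[OF _ this am_pd] show ?thesis unfolding bm_eq by (simp add: Gm_def)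
qed

lemma Gm_pow: "mpow (Gm t) al = mdiag (vector [1/e, 1])"
proof -
  have "(\<chi> i. (vector [1/t, 1] :: real^2) $ i powr al) = (vector [1/e, 1] :: real^2)"
    using t by (simp add: v2_eq_iff powr_divide)
  thus ?thesis unfolding Gm_def mpow_mdiag by simp
qed

lemma F_from_a: "mpow (Gm t) al ** am al k t ** mpow (Gm t) al = Fm al k t"
proof -
  have "mdiag (vector [1/e, 1]) ** am al k t ** mdiag (vector [1/e, 1]) =
      mdiag (vector [1/e, 1]) ** mdiag (vector [e, 1]) ** Fm al k t ** (mdiag (vector [e, 1]) ** mdiag (vector [1/e, 1]))"
    unfolding am_eq by (simp add: matrix_mul_assoc)
  also have "\<dots> = Fm al k t"
  proof -
    have ee: "1/e * e = 1" "e * (1/e) = 1" using e_pos by simp_all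
    show ?thesis unfolding mdiag2_mult ee by (simp add: mdiag2_one)
  qed
  finally show ?thesis unfolding Gm_pow .
qed

end




lemma mfun_id_sym:
  fixes S :: "real^2^2"
  assumes "transpose S = S"
  shows "mfun (\<lambda>x. x) S = S"
proof -
  obtain U d where U: "orthogonal_matrix U" "S = sd U d" using sym_sd_exists[OF assms] by blast
  have "(\<chi> i. d$i) = d" by (simp add: vec_eq_iff)
  thus ?thesis using U by (simp add: mfun_sd)
qed

lemma sym_Phi: "transpose S = S \<Longrightarrow> transpose (Phi g S) = Phi g S"
proof -
  assume "transpose S = S"
  hence "S$2$1 = S$1$2" by (rule sym2)
  thus ?thesis by (simp add: m2_eq_iff Phi_entry)
qed

definition "AAf al k p t = mpow (am al k t) (1/p)"
definition "BBf al k p t = mpow (bm al k t) (1/p)"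
definition "Mtf al k p q t = (1 - al) *\<^sub>R Phi (\<lambda>x. x powr (q/p)) (am al k t) + al *\<^sub>R Phi (\<lambda>x. x powr (q/p)) (bm al k t)"
definition "SGmf al k p t = sd (rot (cc al k t) (ss al k t)) (vector [1, t powr (2/p)])"

locale cons2 = cons +
  fixes p q :: real
  assumes p: "0 < p" and q: "0 < q"
begin

abbreviation "AA \<equiv> AAf al k p t"
abbreviation "BB \<equiv> BBf al k p t"
abbreviation "Mt \<equiv> Mtf al k p q t"
abbreviation "SGm \<equiv> SGmf al k p t"
lemmas AA_def = AAf_def[of al k p t]
lemmas BB_def = BBf_def[of al k p t]
lemmas Mt_def = Mtf_def[of al k p q t]
lemmas SGm_def = SGmf_def[of al k p t]

lemma AA_pd: "pos_def AA" unfolding AA_def mpow_def by (rule pd_mfun[OF am_pd]) simp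
lemma BB_pd: "pos_def BB" unfolding BB_def mpow_def by (rule pd_mfun[OF bm_pd]) simp

lemma pow_back: "pos_def S \<Longrightarrow> mpow (mpow S (1/p)) p = (S :: real^2^2)"
proof -
  assume S: "pos_def S"
  have "mpow (mpow S (1/p)) p = mfun (\<lambda>x. x) S"
    unfolding mpow_def by (rule mfun_comp_pd[OF S]) (use p in \<open>simp add: powr_powr\<close>)
  thus ?thesis using mfun_id_sym[OF pos_def_sym[OF S]] by simp
qed

lemma ApA: "mpow AA p = am al k t" unfolding AA_def by (rule pow_back[OF am_pd])
lemma BpB: "mpow BB p = bm al k t" unfolding BB_def by (rule pow_back[OF bm_pd])

lemma gm_eq: "gmean (matrix_inv (mpow AA p)) (mpow BB p) = Gm t"
  unfolding ApA BpB
  by (rule gmean_char[OF pd_inv(1)[OF am_pd] Gm_pd]) (simp add: pd_inv(2)[OF am_pd] bm_eq)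

lemma Fsg_eq: "Fsg al (mpow AA p) (mpow BB p) = Fm al k t"
  unfolding Fsg_def gm_eq using F_from_a ApA by simp

lemma SG_eq: "SG al p AA BB = SGm"
proof -
  have "(\<chi> i. (vector [1, t*t] :: real^2) $ i powr (1/p)) = (vector [1, t powr (2/p)] :: real^2)"
    using t by (simp add: v2_eq_iff powr_mult powr_add[symmetric])
  thus ?thesis unfolding SG_def Fsg_eq Fm_sd SGm_def mpow_sd[OF U_orth] by simp
qed

lemma SGm_entries: "SGm = mk2 (c*c + w*w*t powr (2/p)) (c*w*(1 - t powr (2/p))) (c*w*(1 - t powr (2/p))) (w*w + c*c*t powr (2/p))"
  unfolding SGm_def sd_def rot_conj by simp

lemma mlog_SG: "(vector [c, w] :: real^2) \<bullet> (mlog (SG al p AA BB) *v vector [c, w]) = 0"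
proof -
  have "mlog (SG al p AA BB) = sd (rot c w) (\<chi> i. ln ((vector [1, t powr (2/p)] :: real^2) $ i))"
    unfolding SG_eq SGm_def mlog_def by (rule mfun_sd[OF U_orth])
  moreover have "transpose (rot c w) *v vector [c, w] = (vector [1, 0] :: real^2)"
    using cs1 by (simp add: rot_def v2_eq_iff algebra_simps)
  ultimately show ?thesis by (simp add: sd_qf sum_2)
qed

lemma Aq: "disc2 (am al k t) > 0 \<Longrightarrow> mpow AA q = Phi (\<lambda>x. x powr (q/p)) (am al k t)"
proof -
  assume d: "disc2 (am al k t) > 0"
  have "mpow AA q = mfun (\<lambda>x. x powr (q/p)) (am al k t)"
    unfolding AA_def mpow_def by (rule mfun_comp_pd[OF am_pd]) (simp add: powr_powr)
  thus ?thesis using mfun_Phi[OF pos_def_sym[OF am_pd] d] by simp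
qed

lemma Bq: "disc2 (bm al k t) > 0 \<Longrightarrow> mpow BB q = Phi (\<lambda>x. x powr (q/p)) (bm al k t)"
proof -
  assume d: "disc2 (bm al k t) > 0"
  have "mpow BB q = mfun (\<lambda>x. x powr (q/p)) (bm al k t)"
    unfolding BB_def mpow_def by (rule mfun_comp_pd[OF bm_pd]) (simp add: powr_powr)
  thus ?thesis using mfun_Phi[OF pos_def_sym[OF bm_pd] d] by simp
qed

context
  assumes da: "disc2 (am al k t) > 0" and db: "disc2 (bm al k t) > 0" and dM: "disc2 Mt > 0"
begin

lemma Mt_eq: "(1 - al) *\<^sub>R mpow AA q + al *\<^sub>R mpow BB q = Mt"
  unfolding Mt_def Aq[OF da] Bq[OF db] ..

lemma Mt_pd: "pos_def Mt"
  unfolding Mt_eq[symmetric]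
  by (rule pd_comb) (use AA_pd BB_pd al q in \<open>auto simp: mpow_def intro!: pd_mfun\<close>)

lemma Amean_eq: "Amean al q AA BB = Phi (\<lambda>x. x powr (1/q)) Mt"
  unfolding Amean_def Mt_eq unfolding mpow_def by (rule mfun_Phi[OF pos_def_sym[OF Mt_pd] dM])

lemma mlog_Amean: "mlog (Amean al q AA BB) = Phi (\<lambda>x. ln x / q) Mt"
proof -
  have "mlog (Amean al q AA BB) = mfun (\<lambda>x. ln x / q) Mt"
    unfolding Amean_def Mt_eq unfolding mpow_def mlog_def by (rule mfun_comp_pd[OF Mt_pd]) simp
  thus ?thesis using mfun_Phi[OF pos_def_sym[OF Mt_pd] dM] by simp
qed

lemma not_chao:
  assumes "(vector [c, w] :: real^2) \<bullet> (Phi (\<lambda>x. ln x / q) Mt *v vector [c, w]) < 0"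
  shows "\<not> chao_le (SG al p AA BB) (Amean al q AA BB)"
proof
  assume "chao_le (SG al p AA BB) (Amean al q AA BB)"
  hence "0 \<le> (vector [c, w] :: real^2) \<bullet> ((mlog (Amean al q AA BB) - mlog (SG al p AA BB)) *v vector [c, w])"
    unfolding chao_le_def loewner_le_def by blast
  also have "\<dots> = (vector [c, w] :: real^2) \<bullet> (Phi (\<lambda>x. ln x / q) Mt *v vector [c, w])"
    using mlog_SG unfolding mlog_Amean by (simp add: matrix_vector_mult_diff_rdistrib inner_diff_right)
  finally show False using assms by simp
qed

lemma not_loew:
  assumes "u \<bullet> (Phi (\<lambda>x. x powr (1/q)) Mt *v u) < u \<bullet> (SGm *v u)"
  shows "\<not> loewner_le (SG al p AA BB) (Amean al q AA BB)"
proof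
  assume "loewner_le (SG al p AA BB) (Amean al q AA BB)"
  hence "0 \<le> u \<bullet> ((Amean al q AA BB - SG al p AA BB) *v u)"
    unfolding loewner_le_def by blast
  also have "\<dots> = u \<bullet> (Phi (\<lambda>x. x powr (1/q)) Mt *v u) - u \<bullet> (SGm *v u)"
    unfolding Amean_eq SG_eq by (simp add: matrix_vector_mult_diff_rdistrib inner_diff_right)
  finally show False using assms by simp
qed

end

end




lemma pd_ev2_pos:
  fixes S :: "real^2^2"
  assumes pd: "pos_def S"
  shows "ev2 S > 0"
proof -
  have sym: "S$2$1 = S$1$2" using sym2[OF pos_def_sym[OF pd]] .
  have q: "\<And>v. v \<noteq> 0 \<Longrightarrow> v \<bullet> (S *v v) > 0" using pd unfolding pos_def_def by blast
  have "(vector [1, 0] :: real^2) \<noteq> 0" by (simp add: v2_eq_iff)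
  from q[OF this] have s11: "S$1$1 > 0" by (simp add: qf2)
  have "(vector [0, 1] :: real^2) \<noteq> 0" by (simp add: v2_eq_iff)
  from q[OF this] have s22: "S$2$2 > 0" by (simp add: qf2)
  have "(vector [S$1$2, - S$1$1] :: real^2) \<noteq> 0" using s11 by (simp add: v2_eq_iff)
  from q[OF this] have "S$1$1 * (S$1$1 * S$2$2 - S$1$2 * S$1$2) > 0"
    using sym by (simp add: qf2 algebra_simps)
  hence det: "S$1$2 * S$1$2 < S$1$1 * S$2$2" using s11 by (simp add: zero_less_mult_iff)
  have "disc2 S < (S$1$1 + S$2$2)^2" unfolding disc2_def using det by (simp add: power2_eq_square algebra_simps)
  hence "sqrt (disc2 S) < S$1$1 + S$2$2" using s11 s22
    by (metis add_pos_pos abs_of_pos real_sqrt_abs real_sqrt_less_mono)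
  thus ?thesis unfolding ev2_def by simp
qed

lemma ev_tendsto:
  fixes S :: "'a \<Rightarrow> real^2^2"
  assumes "((\<lambda>x. S x $ 1 $ 1) \<longlongrightarrow> S0 $ 1 $ 1) F" "((\<lambda>x. S x $ 1 $ 2) \<longlongrightarrow> S0 $ 1 $ 2) F"
    "((\<lambda>x. S x $ 2 $ 2) \<longlongrightarrow> S0 $ 2 $ 2) F"
  shows "((\<lambda>x. ev1 (S x)) \<longlongrightarrow> ev1 S0) F" "((\<lambda>x. ev2 (S x)) \<longlongrightarrow> ev2 S0) F"
    "((\<lambda>x. disc2 (S x)) \<longlongrightarrow> disc2 S0) F"
  unfolding ev1_def ev2_def disc2_def
  by (intro assms tendsto_divide tendsto_add tendsto_diff tendsto_real_sqrt tendsto_mult tendsto_power tendsto_const; simp)+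

lemma Phi_tendsto:
  fixes S :: "'a \<Rightarrow> real^2^2"
  assumes ent: "\<And>i j. ((\<lambda>x. S x $ i $ j) \<longlongrightarrow> S0 $ i $ j) F"
    and d: "disc2 S0 > 0"
    and g1: "((\<lambda>x. g (ev1 (S x))) \<longlongrightarrow> g (ev1 S0)) F"
    and g2: "((\<lambda>x. g (ev2 (S x))) \<longlongrightarrow> g (ev2 S0)) F"
  shows "((\<lambda>x. Phi g (S x) $ i $ j) \<longlongrightarrow> Phi g S0 $ i $ j) F"
proof -
  note E = ev_tendsto[OF ent ent ent]
  have ne: "ev1 S0 - ev2 S0 \<noteq> 0" using d by (simp add: ev_diff)
  show ?thesis
  proof (cases "i = j")
    case True
    show ?thesis unfolding Phi_entry using True
      by simp (intro g1 g2 E ent tendsto_add tendsto_mult tendsto_divide tendsto_diff tendsto_const ne)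
  next
    case False
    show ?thesis unfolding Phi_entry using False
      by simp (intro g1 g2 E ent tendsto_add tendsto_mult tendsto_divide tendsto_diff tendsto_const ne)
  qed
qed

lemma Phi_det:
  fixes S :: "real^2^2"
  assumes sym: "S$2$1 = S$1$2" and d: "disc2 S > 0"
  shows "Phi g S $ 1 $ 1 * Phi g S $ 2 $ 2 - Phi g S $ 1 $ 2 * Phi g S $ 2 $ 1 = g (ev1 S) * g (ev2 S)"
proof -
  define m1 where "m1 = ev1 S" define m2 where "m2 = ev2 S"
  define R where "R = sqrt (disc2 S)"
  have "R * R = disc2 S" unfolding R_def using disc2_nonneg[of S] by simp
  hence R2: "R * R = (S$1$1 - S$2$2)^2 + 4 * (S$1$2)^2" unfolding disc2_def .
  have dm: "m1 - m2 = R" unfolding m1_def m2_def R_def by (rule ev_diff)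
  have ne: "m1 - m2 \<noteq> 0" using d dm unfolding R_def by simp
  have tr: "S$1$1 - m2 + (S$2$2 - m2) = m1 - m2" unfolding m1_def m2_def ev1_def ev2_def by (simp add: field_simps)
  have ch: "(S$1$1 - m2) * (S$2$2 - m2) = S$1$2 * S$1$2"
  proof -
    have "(S$1$1 - m2) * (S$2$2 - m2) = (R*R - (S$1$1 - S$2$2)^2)/4"
      unfolding m2_def ev2_def R_def[symmetric] by (simp add: field_simps power2_eq_square)
    thus ?thesis using R2 by (simp add: power2_eq_square)
  qed
  define kk where "kk = (g m1 - g m2) / (m1 - m2)"
  have kk: "kk * (m1 - m2) = g m1 - g m2" unfolding kk_def using ne by simp
  have "Phi g S $ 1 $ 1 * Phi g S $ 2 $ 2 - Phi g S $ 1 $ 2 * Phi g S $ 2 $ 1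
      = (g m2 + kk * (S$1$1 - m2)) * (g m2 + kk * (S$2$2 - m2)) - (kk * S$1$2) * (kk * S$1$2)"
    unfolding Phi_entry m1_def[symmetric] m2_def[symmetric] kk_def[symmetric] using sym by simp
  also have "\<dots> = g m2 * g m2 + g m2 * (kk * (S$1$1 - m2 + (S$2$2 - m2))) + kk*kk*((S$1$1 - m2) * (S$2$2 - m2) - S$1$2 * S$1$2)"
    by (simp add: algebra_simps)
  also have "\<dots> = g m2 * g m2 + g m2 * (g m1 - g m2)" unfolding tr ch kk by simp
  also have "\<dots> = g m1 * g m2" by (simp add: algebra_simps)
  finally show ?thesis unfolding m1_def m2_def .
qed




lemma lim_tpow: "a > 0 \<Longrightarrow> ((\<lambda>t::real. t powr a) \<longlongrightarrow> 0) (at_right 0)"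
  by (rule tendsto_zero_powrI[OF tendsto_ident_at tendsto_const])
     (auto simp: eventually_at_right_less less_imp_le intro: eventually_mono[OF eventually_at_right_less])

locale lim =
  fixes al p q k :: real
  assumes al: "0 < al" "al < 1" and p: "0 < p" and q: "0 < q" and k: "0 < k"
    and kc1: "ln (km2 al (q/p) k) + (ln (km1 al (q/p) k) - ln (km2 al (q/p) k)) / (km1 al (q/p) k - km2 al (q/p) k) * (kA22 al (q/p) k - km2 al (q/p) k) < 0"
    and kc2: "km1 al (q/p) k powr (1/q) * km2 al (q/p) k powr (1/q) <
        km2 al (q/p) k powr (1/q) + (km1 al (q/p) k powr (1/q) - km2 al (q/p) k powr (1/q)) / (km1 al (q/p) k - km2 al (q/p) k) * (kA11 al (q/p) k - km2 al (q/p) k)"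
    and kc3: "km2 al (q/p) k > 0" and kc4: "km1 al (q/p) k > km2 al (q/p) k"
begin

abbreviation "r \<equiv> q / p"
abbreviation "F \<equiv> at_right (0::real)"
definition "a0 = mk2 0 0 0 1"
definition "b0 = mk2 (k*k) k k 1"
definition "M0 = (1 - al) *\<^sub>R Phi (\<lambda>x. x powr r) a0 + al *\<^sub>R Phi (\<lambda>x. x powr r) b0"

lemma r_pos: "r > 0" using p q by simp
lemma kk_pos: "1 + k*k > 0" by (simp add: add_pos_nonneg)

lemma c_lim: "((\<lambda>t. cc al k t) \<longlongrightarrow> 0) F"
proof -
  have "((\<lambda>t. k * t powr (1 - al)) \<longlongrightarrow> k * 0) F"
    by (intro tendsto_mult tendsto_const lim_tpow) (use al in simp)
  thus ?thesis unfolding cc_def by simp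
qed

lemma w_lim: "((\<lambda>t. ss al k t) \<longlongrightarrow> 1) F"
proof -
  have "((\<lambda>t. sqrt (1 - (cc al k t)^2)) \<longlongrightarrow> sqrt (1 - 0^2)) F"
    by (intro tendsto_real_sqrt tendsto_diff tendsto_const tendsto_power c_lim)
  thus ?thesis unfolding ss_def by simp
qed

lemma e_lim: "((\<lambda>t. t powr al) \<longlongrightarrow> 0) F" by (rule lim_tpow) (use al in simp)
lemma t_lim: "((\<lambda>t. t) \<longlongrightarrow> 0) F" by simp
lemma tau_lim: "((\<lambda>t. t powr (2/p)) \<longlongrightarrow> 0) F" by (rule lim_tpow) (use p in simp)

lemma ev_cons: "\<forall>\<^sub>F t in F. cons al k t"
proof -
  have "\<forall>\<^sub>F t in F. cc al k t < 1" by (rule order_tendstoD(2)[OF c_lim]) simp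
  moreover have "\<forall>\<^sub>F t in F. t < 1" by (rule order_tendstoD(2)[OF t_lim]) simp
  moreover have "\<forall>\<^sub>F t in F. 0 < t" by (rule eventually_at_right_less)
  ultimately show ?thesis by eventually_elim (use al k in \<open>simp add: cons_def\<close>)
qed

lemmas L0 = c_lim w_lim e_lim t_lim tau_lim

lemma am_e: "am al k t $ 1 $ 1 = k*k*(t*t) + t powr al * t powr al * (t*t) * (ss al k t * ss al k t)"
  "am al k t $ 1 $ 2 = k*t* ss al k t*(1 - t*t)" "am al k t $ 2 $ 1 = k*t* ss al k t*(1 - t*t)"
  "am al k t $ 2 $ 2 = ss al k t * ss al k t + t*t*(cc al k t * cc al k t)"
  by (simp_all add: am_def Let_def)

lemma bm_e: "bm al k t $ 1 $ 1 = k*k + t powr al * t powr al * (ss al k t * ss al k t)"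
  "bm al k t $ 1 $ 2 = k* ss al k t*(1 - t*t)" "bm al k t $ 2 $ 1 = k* ss al k t*(1 - t*t)"
  "bm al k t $ 2 $ 2 = ss al k t * ss al k t + t*t*(cc al k t * cc al k t)"
  by (simp_all add: bm_def Let_def)

lemma am_ent: "((\<lambda>t. am al k t $ i $ j) \<longlongrightarrow> a0 $ i $ j) F"
proof -
  have 11: "((\<lambda>t. am al k t $ 1 $ 1) \<longlongrightarrow> k*k*(0*0) + 0 * 0 * (0*0) * (1 * 1)) F"
    unfolding am_e by (intro tendsto_intros L0)
  have 12: "((\<lambda>t. am al k t $ 1 $ 2) \<longlongrightarrow> k*0*1*(1 - 0*0)) F"
    unfolding am_e by (intro tendsto_intros L0)
  have 21: "((\<lambda>t. am al k t $ 2 $ 1) \<longlongrightarrow> k*0*1*(1 - 0*0)) F"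
    unfolding am_e by (intro tendsto_intros L0)
  have 22: "((\<lambda>t. am al k t $ 2 $ 2) \<longlongrightarrow> 1*1 + 0*0*(0*0)) F"
    unfolding am_e by (intro tendsto_intros L0)
  show ?thesis using exhaust_2[of i] exhaust_2[of j] 11 12 21 22 unfolding a0_def by auto
qed

lemma bm_ent: "((\<lambda>t. bm al k t $ i $ j) \<longlongrightarrow> b0 $ i $ j) F"
proof -
  have 11: "((\<lambda>t. bm al k t $ 1 $ 1) \<longlongrightarrow> k*k + 0 * 0 * (1 * 1)) F"
    unfolding bm_e by (intro tendsto_intros L0)
  have 12: "((\<lambda>t. bm al k t $ 1 $ 2) \<longlongrightarrow> k*1*(1 - 0*0)) F"
    unfolding bm_e by (intro tendsto_intros L0)
  have 21: "((\<lambda>t. bm al k t $ 2 $ 1) \<longlongrightarrow> k*1*(1 - 0*0)) F"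
    unfolding bm_e by (intro tendsto_intros L0)
  have 22: "((\<lambda>t. bm al k t $ 2 $ 2) \<longlongrightarrow> 1*1 + 0*0*(0*0)) F"
    unfolding bm_e by (intro tendsto_intros L0)
  show ?thesis using exhaust_2[of i] exhaust_2[of j] 11 12 21 22 unfolding b0_def by auto
qed

lemma a0_ev: "ev1 a0 = 1" "ev2 a0 = 0" "disc2 a0 = 1"
  by (simp_all add: a0_def ev1_def ev2_def disc2_def)

lemma b0_ev: "ev1 b0 = 1 + k*k" "ev2 b0 = 0" "disc2 b0 = (1 + k*k)^2"
proof -
  show d: "disc2 b0 = (1 + k*k)^2" by (simp add: b0_def disc2_def power2_eq_square algebra_simps)
  have s: "sqrt (disc2 b0) = 1 + k*k" unfolding d by (simp add: add_nonneg_nonneg)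
  show "ev1 b0 = 1 + k*k" "ev2 b0 = 0" unfolding ev1_def ev2_def s by (simp_all add: b0_def)
qed

lemma ev2_nonneg_am: "\<forall>\<^sub>F t in F. 0 \<le> ev2 (am al k t)"
  using ev_cons by eventually_elim (use cons.am_pd pd_ev2_pos less_imp_le in blast)
lemma ev2_nonneg_bm: "\<forall>\<^sub>F t in F. 0 \<le> ev2 (bm al k t)"
  using ev_cons by eventually_elim (use cons.bm_pd pd_ev2_pos less_imp_le in blast)

lemma Pa_ent: "((\<lambda>t. Phi (\<lambda>x. x powr r) (am al k t) $ i $ j) \<longlongrightarrow> Phi (\<lambda>x. x powr r) a0 $ i $ j) F"
proof (rule Phi_tendsto[OF am_ent])
  note E = ev_tendsto[OF am_ent am_ent am_ent]
  show "disc2 a0 > 0" by (simp add: a0_ev)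
  show "((\<lambda>x. ev1 (am al k x) powr r) \<longlongrightarrow> ev1 a0 powr r) F"
    by (rule tendsto_powr[OF E(1) tendsto_const]) (simp add: a0_ev)
  have "((\<lambda>x. ev2 (am al k x) powr r) \<longlongrightarrow> 0) F"
    by (rule tendsto_zero_powrI[OF _ tendsto_const ev2_nonneg_am r_pos]) (use E(2) in \<open>simp add: a0_ev\<close>)
  thus "((\<lambda>x. ev2 (am al k x) powr r) \<longlongrightarrow> ev2 a0 powr r) F" by (simp add: a0_ev)
qed

lemma Pb_ent: "((\<lambda>t. Phi (\<lambda>x. x powr r) (bm al k t) $ i $ j) \<longlongrightarrow> Phi (\<lambda>x. x powr r) b0 $ i $ j) F"
proof (rule Phi_tendsto[OF bm_ent])
  note E = ev_tendsto[OF bm_ent bm_ent bm_ent]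
  show "disc2 b0 > 0" using b0_ev(3) kk_pos by simp
  show "((\<lambda>x. ev1 (bm al k x) powr r) \<longlongrightarrow> ev1 b0 powr r) F"
    by (rule tendsto_powr[OF E(1) tendsto_const]) (use kk_pos in \<open>simp add: b0_ev\<close>)
  have "((\<lambda>x. ev2 (bm al k x) powr r) \<longlongrightarrow> 0) F"
    by (rule tendsto_zero_powrI[OF _ tendsto_const ev2_nonneg_bm r_pos]) (use E(2) in \<open>simp add: b0_ev\<close>)
  thus "((\<lambda>x. ev2 (bm al k x) powr r) \<longlongrightarrow> ev2 b0 powr r) F" by (simp add: b0_ev)
qed

lemma Mt_ent: "((\<lambda>t. Mtf al k p q t $ i $ j) \<longlongrightarrow> M0 $ i $ j) F"
  unfolding Mtf_def M0_def by (simp, intro tendsto_add tendsto_mult tendsto_const Pa_ent Pb_ent)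

lemma beta: "(1 + k*k) powr r / (1 + k*k) = (1 + k^2) powr (r - 1)"
  using kk_pos by (simp add: powr_diff power2_eq_square)

lemma Pa0: "Phi (\<lambda>x. x powr r) a0 $ i $ j = a0 $ i $ j"
  by (simp add: Phi_entry a0_ev)

lemma Pb0: "Phi (\<lambda>x. x powr r) b0 $ i $ j = (1 + k^2) powr (r - 1) * b0 $ i $ j"
  using kk_pos by (simp add: Phi_entry b0_ev beta[symmetric])

lemma M0_eq: "M0 = mk2 (kA11 al r k) (kA12 al r k) (kA12 al r k) (kA22 al r k)"
  unfolding M0_def m2_eq_iff by (simp add: Pa0 Pb0) (simp add: kA11_def kA12_def kA22_def a0_def b0_def power2_eq_square algebra_simps)

lemma M0_ev: "ev1 M0 = km1 al r k" "ev2 M0 = km2 al r k"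
  unfolding M0_eq ev1_def ev2_def disc2_def km1_def km2_def by simp_all

lemma M0_disc: "disc2 M0 > 0"
proof -
  have "sqrt (disc2 M0) = km1 al r k - km2 al r k" using ev_diff[of M0] by (simp add: M0_ev)
  thus ?thesis using kc4 by (metis diff_gt_0_iff_gt real_sqrt_gt_0_iff)
qed

lemma M0_sym: "M0 $ 2 $ 1 = M0 $ 1 $ 2" by (simp add: M0_eq)

lemma Mt_E: "((\<lambda>t. ev1 (Mtf al k p q t)) \<longlongrightarrow> ev1 M0) F" "((\<lambda>t. ev2 (Mtf al k p q t)) \<longlongrightarrow> ev2 M0) F"
    "((\<lambda>t. disc2 (Mtf al k p q t)) \<longlongrightarrow> disc2 M0) F"
  by (rule ev_tendsto[OF Mt_ent Mt_ent Mt_ent])+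

lemma PL_ent: "((\<lambda>t. Phi (\<lambda>x. ln x / q) (Mtf al k p q t) $ i $ j) \<longlongrightarrow> Phi (\<lambda>x. ln x / q) M0 $ i $ j) F"
proof (rule Phi_tendsto[OF Mt_ent M0_disc])
  show "((\<lambda>x. ln (ev1 (Mtf al k p q x)) / q) \<longlongrightarrow> ln (ev1 M0) / q) F"
    by (intro tendsto_divide tendsto_ln Mt_E tendsto_const) (use kc3 kc4 q in \<open>simp_all add: M0_ev\<close>)
  show "((\<lambda>x. ln (ev2 (Mtf al k p q x)) / q) \<longlongrightarrow> ln (ev2 M0) / q) F"
    by (intro tendsto_divide tendsto_ln Mt_E tendsto_const) (use kc3 kc4 q in \<open>simp_all add: M0_ev\<close>)
qed

lemma PQ_ent: "((\<lambda>t. Phi (\<lambda>x. x powr (1/q)) (Mtf al k p q t) $ i $ j) \<longlongrightarrow> Phi (\<lambda>x. x powr (1/q)) M0 $ i $ j) F"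
proof (rule Phi_tendsto[OF Mt_ent M0_disc])
  show "((\<lambda>x. ev1 (Mtf al k p q x) powr (1/q)) \<longlongrightarrow> ev1 M0 powr (1/q)) F"
    by (rule tendsto_powr[OF Mt_E(1) tendsto_const]) (use kc3 kc4 in \<open>simp add: M0_ev\<close>)
  show "((\<lambda>x. ev2 (Mtf al k p q x) powr (1/q)) \<longlongrightarrow> ev2 M0 powr (1/q)) F"
    by (rule tendsto_powr[OF Mt_E(2) tendsto_const]) (use kc3 in \<open>simp add: M0_ev\<close>)
qed

lemma Q1_lim: "((\<lambda>t. (vector [cc al k t, ss al k t] :: real^2) \<bullet> (Phi (\<lambda>x. ln x / q) (Mtf al k p q t) *v vector [cc al k t, ss al k t]))
   \<longlongrightarrow> Phi (\<lambda>x. ln x / q) M0 $ 2 $ 2) F"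
proof -
  have "((\<lambda>t. cc al k t * (Phi (\<lambda>x. ln x / q) (Mtf al k p q t) $ 1 $ 1 * cc al k t + Phi (\<lambda>x. ln x / q) (Mtf al k p q t) $ 1 $ 2 * ss al k t)
     + ss al k t * (Phi (\<lambda>x. ln x / q) (Mtf al k p q t) $ 2 $ 1 * cc al k t + Phi (\<lambda>x. ln x / q) (Mtf al k p q t) $ 2 $ 2 * ss al k t))
    \<longlongrightarrow> 0 * (Phi (\<lambda>x. ln x / q) M0 $ 1 $ 1 * 0 + Phi (\<lambda>x. ln x / q) M0 $ 1 $ 2 * 1)
     + 1 * (Phi (\<lambda>x. ln x / q) M0 $ 2 $ 1 * 0 + Phi (\<lambda>x. ln x / q) M0 $ 2 $ 2 * 1)) F"
    by (intro tendsto_add tendsto_mult PL_ent c_lim w_lim)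
  thus ?thesis by (simp add: qf2)
qed

lemma Q1_neg: "Phi (\<lambda>x. ln x / q) M0 $ 2 $ 2 < 0"
proof -
  have h: "M0 $ 2 $ 2 = kA22 al r k" by (simp add: M0_eq)
  have "Phi (\<lambda>x. ln x / q) M0 $ 2 $ 2 = ln (km2 al r k) / q + ((ln (km1 al r k) / q - ln (km2 al r k) / q) / (km1 al r k - km2 al r k)) * (kA22 al r k - km2 al r k)"
    unfolding Phi_entry M0_ev h by simp
  also have "\<dots> = (ln (km2 al r k) + (ln (km1 al r k) - ln (km2 al r k)) / (km1 al r k - km2 al r k) * (kA22 al r k - km2 al r k)) / q"
    using kc4 q by (simp add: field_simps)
  finally have "Phi (\<lambda>x. ln x / q) M0 $ 2 $ 2 = (ln (km2 al r k) + (ln (km1 al r k) - ln (km2 al r k)) / (km1 al r k - km2 al r k) * (kA22 al r k - km2 al r k)) / q" .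
  thus ?thesis using kc1 q by (simp add: divide_neg_pos)
qed

definition "X0 = Phi (\<lambda>x. x powr (1/q)) M0"
definition "u0 = (vector [- X0 $ 1 $ 2, X0 $ 1 $ 1] :: real^2)"

lemma SG_ent: "SGmf al k p t = mk2 (cc al k t * cc al k t + ss al k t * ss al k t * t powr (2/p))
   (cc al k t * ss al k t * (1 - t powr (2/p))) (cc al k t * ss al k t * (1 - t powr (2/p)))
   (ss al k t * ss al k t + cc al k t * cc al k t * t powr (2/p))"
  unfolding SGmf_def sd_def rot_conj by simp

lemma Q2_lim: "((\<lambda>t. u0 \<bullet> (Phi (\<lambda>x. x powr (1/q)) (Mtf al k p q t) *v u0) - u0 \<bullet> (SGmf al k p t *v u0))
   \<longlongrightarrow> u0 \<bullet> (X0 *v u0) - u0 \<bullet> (mk2 0 0 0 1 *v u0)) F"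
proof -
  have A: "((\<lambda>t. u0 \<bullet> (Phi (\<lambda>x. x powr (1/q)) (Mtf al k p q t) *v u0)) \<longlongrightarrow> u0 \<bullet> (X0 *v u0)) F"
    unfolding qf2 X0_def by (intro tendsto_add tendsto_mult tendsto_const PQ_ent)
  have "((\<lambda>t. u0 \<bullet> (SGmf al k p t *v u0)) \<longlongrightarrow>
      u0$1*((0*0 + 1*1*0)*u0$1 + (0*1*(1 - 0))*u0$2) + u0$2*((0*1*(1 - 0))*u0$1 + (1*1 + 0*0*0)*u0$2)) F"
    unfolding qf2 SG_ent mk2_entries by (intro tendsto_add tendsto_mult tendsto_diff tendsto_const c_lim w_lim tau_lim)
  hence B: "((\<lambda>t. u0 \<bullet> (SGmf al k p t *v u0)) \<longlongrightarrow> u0 \<bullet> (mk2 0 0 0 1 *v u0)) F"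
    by (simp add: qf2)
  show ?thesis by (rule tendsto_diff[OF A B])
qed

lemma Q2_neg: "u0 \<bullet> (X0 *v u0) - u0 \<bullet> (mk2 0 0 0 1 *v u0) < 0"
proof -
  have sym: "X0 $ 2 $ 1 = X0 $ 1 $ 2" unfolding X0_def by (simp add: Phi_entry M0_sym)
  have det: "X0 $ 1 $ 1 * X0 $ 2 $ 2 - X0 $ 1 $ 2 * X0 $ 2 $ 1 = km1 al r k powr (1/q) * km2 al r k powr (1/q)"
    unfolding X0_def using Phi_det[OF M0_sym M0_disc] by (simp add: M0_ev)
  have x11: "X0 $ 1 $ 1 = km2 al r k powr (1/q) + (km1 al r k powr (1/q) - km2 al r k powr (1/q)) / (km1 al r k - km2 al r k) * (kA11 al r k - km2 al r k)"
  proof -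
    have h: "M0 $ 1 $ 1 = kA11 al r k" by (simp add: M0_eq)
    show ?thesis unfolding X0_def Phi_entry M0_ev h by simp
  qed
  have gt: "km1 al r k powr (1/q) * km2 al r k powr (1/q) < X0 $ 1 $ 1" using kc2 x11 by simp
  have pos: "0 < km1 al r k powr (1/q) * km2 al r k powr (1/q)" using kc3 kc4 by simp
  have "u0 \<bullet> (X0 *v u0) - u0 \<bullet> (mk2 0 0 0 1 *v u0) = X0 $ 1 $ 1 * (X0 $ 1 $ 1 * X0 $ 2 $ 2 - X0 $ 1 $ 2 * X0 $ 2 $ 1) - X0 $ 1 $ 1 * X0 $ 1 $ 1"
    unfolding u0_def qf2 using sym by (simp add: algebra_simps)
  also have "\<dots> = X0 $ 1 $ 1 * (km1 al r k powr (1/q) * km2 al r k powr (1/q) - X0 $ 1 $ 1)"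
    unfolding det by (simp add: algebra_simps)
  also have "\<dots> < 0" using gt pos by (simp add: mult_pos_neg)
  finally show ?thesis .
qed

lemma exists_t: "\<exists>t. cons al k t \<and> disc2 (am al k t) > 0 \<and> disc2 (bm al k t) > 0 \<and> disc2 (Mtf al k p q t) > 0
   \<and> (vector [cc al k t, ss al k t] :: real^2) \<bullet> (Phi (\<lambda>x. ln x / q) (Mtf al k p q t) *v vector [cc al k t, ss al k t]) < 0
   \<and> u0 \<bullet> (Phi (\<lambda>x. x powr (1/q)) (Mtf al k p q t) *v u0) < u0 \<bullet> (SGmf al k p t *v u0)"
proof -
  have e1: "\<forall>\<^sub>F t in F. disc2 (am al k t) > 0"
    by (rule order_tendstoD(1)[OF ev_tendsto(3)[OF am_ent am_ent am_ent]]) (simp add: a0_ev)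
  have e2: "\<forall>\<^sub>F t in F. disc2 (bm al k t) > 0"
    by (rule order_tendstoD(1)[OF ev_tendsto(3)[OF bm_ent bm_ent bm_ent]]) (use b0_ev(3) kk_pos in simp)
  have e3: "\<forall>\<^sub>F t in F. disc2 (Mtf al k p q t) > 0"
    by (rule order_tendstoD(1)[OF Mt_E(3) M0_disc])
  have e4: "\<forall>\<^sub>F t in F. (vector [cc al k t, ss al k t] :: real^2) \<bullet> (Phi (\<lambda>x. ln x / q) (Mtf al k p q t) *v vector [cc al k t, ss al k t]) < 0"
    by (rule order_tendstoD(2)[OF Q1_lim Q1_neg])
  have e5: "\<forall>\<^sub>F t in F. u0 \<bullet> (Phi (\<lambda>x. x powr (1/q)) (Mtf al k p q t) *v u0) - u0 \<bullet> (SGmf al k p t *v u0) < 0"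
    by (rule order_tendstoD(2)[OF Q2_lim Q2_neg])
  have "\<forall>\<^sub>F t in F. cons al k t \<and> disc2 (am al k t) > 0 \<and> disc2 (bm al k t) > 0 \<and> disc2 (Mtf al k p q t) > 0
   \<and> (vector [cc al k t, ss al k t] :: real^2) \<bullet> (Phi (\<lambda>x. ln x / q) (Mtf al k p q t) *v vector [cc al k t, ss al k t]) < 0
   \<and> u0 \<bullet> (Phi (\<lambda>x. x powr (1/q)) (Mtf al k p q t) *v u0) < u0 \<bullet> (SGmf al k p t *v u0)"
    using ev_cons e1 e2 e3 e4 e5 by eventually_elim simp
  from eventually_happens[OF this] show ?thesis by simp
qed

end


theorem theorem4p23:
  fixes \<alpha> p q :: real
  assumes "0 < \<alpha>" "\<alpha> < 1" "0 < p" "0 < q"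
  shows "\<exists>A B :: real^2^2. pos_def A \<and> pos_def B \<and>
           \<not> chao_le (SG \<alpha> p A B) (Amean \<alpha> q A B) \<and>
           \<not> loewner_le (SG \<alpha> p A B) (Amean \<alpha> q A B)"
proof -
  have r: "0 < q / p" using assms by simp
  obtain k where k: "k > 0"
    and kc: "ln (km2 \<alpha> (q/p) k) + (ln (km1 \<alpha> (q/p) k) - ln (km2 \<alpha> (q/p) k)) / (km1 \<alpha> (q/p) k - km2 \<alpha> (q/p) k) * (kA22 \<alpha> (q/p) k - km2 \<alpha> (q/p) k) < 0
     \<and> km1 \<alpha> (q/p) k powr (1/q) * km2 \<alpha> (q/p) k powr (1/q) <
        km2 \<alpha> (q/p) k powr (1/q) + (km1 \<alpha> (q/p) k powr (1/q) - km2 \<alpha> (q/p) k powr (1/q)) / (km1 \<alpha> (q/p) k - km2 \<alpha> (q/p) k) * (kA11 \<alpha> (q/p) k - km2 \<alpha> (q/p) k)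
     \<and> km2 \<alpha> (q/p) k > 0 \<and> km1 \<alpha> (q/p) k > km2 \<alpha> (q/p) k"
    using kappa_choice[OF r assms(1,2,4)] by blast
  interpret L: lim \<alpha> p q k
    using assms k kc by unfold_locales auto
  obtain t where t: "cons \<alpha> k t" "disc2 (am \<alpha> k t) > 0" "disc2 (bm \<alpha> k t) > 0" "disc2 (Mtf \<alpha> k p q t) > 0"
    "(vector [cc \<alpha> k t, ss \<alpha> k t] :: real^2) \<bullet> (Phi (\<lambda>x. ln x / q) (Mtf \<alpha> k p q t) *v vector [cc \<alpha> k t, ss \<alpha> k t]) < 0"
    "L.u0 \<bullet> (Phi (\<lambda>x. x powr (1/q)) (Mtf \<alpha> k p q t) *v L.u0) < L.u0 \<bullet> (SGmf \<alpha> k p t *v L.u0)"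
    using L.exists_t by blast
  interpret C: cons2 \<alpha> k t p q
    using t(1) assms by (simp add: cons2_def cons2_axioms_def)
  show ?thesis
  proof (intro exI conjI)
    show "pos_def (AAf \<alpha> k p t)" by (rule C.AA_pd)
    show "pos_def (BBf \<alpha> k p t)" by (rule C.BB_pd)
    show "\<not> chao_le (SG \<alpha> p (AAf \<alpha> k p t) (BBf \<alpha> k p t)) (Amean \<alpha> q (AAf \<alpha> k p t) (BBf \<alpha> k p t))"
      by (rule C.not_chao[OF t(2,3,4,5)])
    show "\<not> loewner_le (SG \<alpha> p (AAf \<alpha> k p t) (BBf \<alpha> k p t)) (Amean \<alpha> q (AAf \<alpha> k p t) (BBf \<alpha> k p t))"
      by (rule C.not_loew[OF t(2,3,4,6)])
  qed
qed

end
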